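(* Let $SA_{106} = 224{,}403{,}121{,}196{,}654{,}400$, $SA_{107} = 448{,}806{,}242{,}393{,}308{,}800$ and $N_{15} = 614{,}889{,}782{,}588{,}491{,}410$. The only integers $n$ in the open interval $(SA_{107}, N_{15})$ satisfying \[ \frac{\sigma(n)}{n} > \frac{\sigma(SA_{106})}{SA_{106}} \] are $n_1 = 497{,}325{,}836{,}165{,}558{,}400$ and $n_2 = 521{,}585{,}633{,}051{,}683{,}200$.
   Context: $\sigma(n)$ is the sum of the positive divisors of $n$. $SA_{106}$ and $SA_{107}$ are the $106$th and $107$th superabundant numbers (a positive integer $N$ is superabundant if $\sigma(m)/m<\sigma(N)/N$ for all $0<m<N$), and $N_{15}$ is the product of the first $15$ primes. *)

theory Defs
  imports Complex_Main "HOL-Computational_Algebra.Primes"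
begin

definition sigma :: "nat \<Rightarrow> nat" where
  "sigma n = (\<Sum>d\<in>{d. d dvd n \<and> 0 < d}. d)"

end

theory Submission
  imports Defs
begin


lemma sigma_finite_set: "n > 0 \<Longrightarrow> finite {d::nat. d dvd n \<and> 0 < d}"
  by (rule finite_subset[of _ "{..n}"]) (auto dest: dvd_imp_le)

lemma sigma_mult:
  fixes m n :: nat
  assumes "coprime m n" "m > 0" "n > 0"
  shows "sigma (m * n) = sigma m * sigma n"
proof -
  let ?Dm = "{d::nat. d dvd m \<and> 0 < d}" and ?Dn = "{d::nat. d dvd n \<and> 0 < d}"
  have fm: "finite ?Dm" and fn: "finite ?Dn" using assms sigma_finite_set by auto
  have inj: "inj_on (\<lambda>(a,b). a * b) (?Dm \<times> ?Dn)"
  proof (rule inj_onI, clarify)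
    fix a b a' b' :: nat
    assume h: "a * b = a' * b'" "a dvd m" "0 < a" "b dvd n" "0 < b" "a' dvd m" "0 < a'" "b' dvd n" "0 < b'"
    have c1: "coprime a b'" using assms(1) h coprime_divisors by blast
    have c2: "coprime a' b" using assms(1) h coprime_divisors by blast
    have "a dvd a' * b'" using h(1) by (metis dvd_triv_left)
    hence "a dvd a'" using c1 coprime_dvd_mult_left_iff by blast
    moreover have "a' dvd a * b" using h(1) by (metis dvd_triv_left)
    hence "a' dvd a" using c2 coprime_dvd_mult_left_iff by blast
    ultimately have "a = a'" using dvd_antisym by blast
    with h show "a = a' \<and> b = b'" by simp
  qed
  have img: "(\<lambda>(a,b). a * b) ` (?Dm \<times> ?Dn) = {d. d dvd m * n \<and> 0 < d}"
  proof
    show "(\<lambda>(a,b). a * b) ` (?Dm \<times> ?Dn) \<subseteq> {d. d dvd m * n \<and> 0 < d}"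
      by (auto intro: mult_dvd_mono)
  next
    show "{d. d dvd m * n \<and> 0 < d} \<subseteq> (\<lambda>(a,b). a * b) ` (?Dm \<times> ?Dn)"
    proof clarify
      fix d assume "d dvd m * n" "0 < d"
      then obtain b c where "d = b * c" "b dvd m" "c dvd n" using division_decomp by blast
      with \<open>0 < d\<close> show "d \<in> (\<lambda>(a,b). a * b) ` (?Dm \<times> ?Dn)"
        by (auto intro!: image_eqI[of _ _ "(b,c)"])
    qed
  qed
  have "sigma m * sigma n = (\<Sum>a\<in>?Dm. \<Sum>b\<in>?Dn. a * b)"
    unfolding sigma_def by (simp add: sum_product)
  also have "\<dots> = (\<Sum>x\<in>?Dm \<times> ?Dn. (\<lambda>(a,b). a * b) x)"
    by (simp add: sum.cartesian_product)
  also have "\<dots> = (\<Sum>d\<in>(\<lambda>(a,b). a * b) ` (?Dm \<times> ?Dn). d)"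
    by (rule sum.reindex[OF inj, symmetric, unfolded comp_def])
  also have "\<dots> = sigma (m * n)" unfolding sigma_def img ..
  finally show ?thesis ..
qed

lemma sigma_prime_power:
  fixes p :: nat assumes "prime p"
  shows "sigma (p ^ a) = (\<Sum>i\<le>a. p ^ i)"
proof -
  have "{d. d dvd p ^ a \<and> 0 < d} = (\<lambda>i. p ^ i) ` {..a}"
    using assms by (auto simp: divides_primepow_nat prime_gt_0_nat)
  moreover have "inj_on (\<lambda>i. p ^ i) {..a}"
    using prime_gt_1_nat[OF assms] by (intro inj_onI) simp
  ultimately show ?thesis unfolding sigma_def by (simp add: sum.reindex)
qed

lemma sigma_prime_power_closed:
  fixes p :: nat assumes "prime p"
  shows "sigma (p ^ a) * (p - 1) = p ^ Suc a - 1"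
proof -
  have "(\<Sum>i\<le>a. p ^ i) * (p - 1) = p ^ Suc a - 1"
  proof (induction a)
    case 0 then show ?case by simp
  next
    case (Suc a)
    have "p \<ge> 1" using assms prime_gt_0_nat by (simp add: Suc_leI)
    have "(\<Sum>i\<le>Suc a. p ^ i) * (p - 1) = (\<Sum>i\<le>a. p ^ i) * (p - 1) + p ^ Suc a * (p - 1)"
      by (simp add: algebra_simps)
    also have "\<dots> = p ^ Suc a - 1 + p ^ Suc a * (p - 1)" using Suc by simp
    also have "\<dots> = p ^ Suc (Suc a) - 1"
    proof -
      have "p ^ Suc a \<ge> 1" using \<open>p \<ge> 1\<close> by simp
      then show ?thesis by (simp add: algebra_simps diff_mult_distrib2)
    qed
    finally show ?case .
  qed
  with assms show ?thesis by (simp add: sigma_prime_power)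
qed

lemma sigma_prod:
  assumes "finite S" "\<forall>p\<in>S. prime (p::nat)"
  shows "sigma (\<Prod>p\<in>S. p ^ e p) = (\<Prod>p\<in>S. sigma (p ^ e p))"
  using assms
proof (induction S rule: finite_induct)
  case empty
  have "{d::nat. d dvd 1 \<and> 0 < d} = {1}" by auto
  then have "sigma 1 = 1" unfolding sigma_def by simp
  then show ?case by simp
next
  case (insert q S)
  have cop: "coprime (q ^ e q) (\<Prod>p\<in>S. p ^ e p)"
  proof (rule prod_coprime_right)
    fix p assume "p \<in> S"
    then have "p \<noteq> q" "prime p" "prime q" using insert by auto
    then show "coprime (q ^ e q) (p ^ e p)" by (simp add: primes_coprime)
  qed
  have pos1: "q ^ e q > 0" using insert prime_gt_0_nat by simp
  have pos2: "(\<Prod>p\<in>S. p ^ e p) > 0" using insert prime_gt_0_nat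
    by (intro prod_pos) auto
  show ?case using insert cop pos1 pos2 by (simp add: sigma_mult)
qed




definition Fp :: "nat \<Rightarrow> nat \<Rightarrow> real" where "Fp p a = real (sigma (p ^ a)) / real (p ^ a)"
definition Hh :: "nat \<Rightarrow> nat \<Rightarrow> real" where "Hh p a = Fp p a ^ 144 / real p ^ a"

lemma Fp_closed:
  assumes "prime p"
  shows "Fp p a = (real p ^ Suc a - 1) / (real p ^ a * (real p - 1))"
proof -
  have p1: "p \<ge> 1" using prime_gt_0_nat[OF assms] by simp
  have p2: "real p - 1 > 0" using prime_gt_1_nat[OF assms] by simp
  have "real (sigma (p ^ a) * (p - 1)) = real (p ^ Suc a - 1)"
    using sigma_prime_power_closed[OF assms] by simp
  hence "real (sigma (p ^ a)) * (real p - 1) = real p ^ Suc a - 1"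
    using p1 by (simp add: of_nat_diff)
  hence eq: "real (sigma (p ^ a)) = (real p ^ Suc a - 1) / (real p - 1)"
    using p2 by (simp add: field_simps)
  show ?thesis unfolding Fp_def eq of_nat_power by (simp add: divide_divide_eq_left mult.commute)
qed

lemma Fp_pos: "prime p \<Longrightarrow> Fp p a > 0"
proof -
  assume pp: "prime p"
  have "sigma (p ^ a) \<ge> 1"
    using sigma_prime_power[OF pp] by (simp add: sum.atMost_shift)
  then show ?thesis unfolding Fp_def using prime_gt_0_nat[OF pp] by simp
qed

lemma Fp_0: "prime p \<Longrightarrow> Fp p 0 = 1"
  using prime_gt_1_nat[of p] by (simp add: Fp_closed)

lemma Hh_0: "prime p \<Longrightarrow> Hh p 0 = 1"
  by (simp add: Hh_def Fp_0)

lemma Hh_pos: "prime p \<Longrightarrow> Hh p a > 0"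
  unfolding Hh_def using Fp_pos[of p a] prime_gt_0_nat[of p] by simp

lemma Fp_ratio:
  assumes "prime p"
  shows "Fp p a / Fp p b = real ((p^(a+1)-1)*p^b) / real ((p^(b+1)-1)*p^a)"
proof -
  have p1: "(1::nat) \<le> p ^ k" for k using prime_gt_0_nat[OF assms] by simp
  have p2: "real p - 1 > 0" using prime_gt_1_nat[OF assms] by simp
  have p3: "real p ^ Suc k - 1 > 0" for k
  proof -
    have "real p > 1" using prime_gt_1_nat[OF assms] by simp
    then have "real p ^ Suc k > 1" by (rule one_less_power) simp
    then show ?thesis by simp
  qed
  have p4: "real p > 0" using p2 by simp
  define x where "x = real p ^ a"
  define y where "y = real p ^ b"
  have x0: "x > 0" "y > 0" unfolding x_def y_def using p4 by simp_all
  have ya: "real p * y - 1 > 0" "real p * x - 1 > 0" using p3[of b] p3[of a] unfolding x_def y_def by simp_all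
  have L: "Fp p a / Fp p b = ((real p * x - 1) * y) / ((real p * y - 1) * x)"
    unfolding Fp_closed[OF assms] x_def[symmetric] y_def[symmetric] power_Suc
  proof -
    have n1: "real p * y - 1 \<noteq> 0" "real p * x - 1 \<noteq> 0" "x \<noteq> 0" "y \<noteq> 0" "real p - 1 \<noteq> 0"
      using x0 ya p2 by auto
    show "(real p * x - 1) / (x * (real p - 1)) / ((real p * y - 1) / (y * (real p - 1))) =
      (real p * x - 1) * y / ((real p * y - 1) * x)"
      using n1 by (simp add: divide_simps)
  qed
  have R1: "real ((p^(a+1)-1)*p^b) = (real p * x - 1) * y"
    using p1[of "Suc a"] unfolding x_def y_def by (simp add: of_nat_diff)
  have R2: "real ((p^(b+1)-1)*p^a) = (real p * y - 1) * x"
    using p1[of "Suc b"] unfolding x_def y_def by (simp add: of_nat_diff)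
  show ?thesis unfolding L R1 R2 ..
qed

lemma Fp_le: 
  assumes "prime p" shows "Fp p a \<le> real p / (real p - 1)"
proof -
  have p2: "real p - 1 > 0" using prime_gt_1_nat[OF assms] by simp
  have p4: "real p ^ a > 0" using p2 by simp
  have "real p ^ Suc a - 1 \<le> real p * real p ^ a" by simp
  then show ?thesis using p2 p4 by (simp add: Fp_closed[OF assms] field_simps)
qed

lemma Fp_ratio_le:
  assumes "prime p"
  shows "Fp p a / Fp p b \<le> real (p^(b+1)) / real (p^(b+1)-1)"
proof -
  have p2: "real p - 1 > 0" using prime_gt_1_nat[OF assms] by simp
  have p3: "real p ^ Suc b - 1 > 0"
  proof -
    have "real p > 1" using prime_gt_1_nat[OF assms] by simp
    then have "real p ^ Suc b > 1" by (rule one_less_power) simp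
    then show ?thesis by simp
  qed
  have p1: "(1::nat) \<le> p ^ Suc b" using prime_gt_0_nat[OF assms] by simp
  have "Fp p a / Fp p b \<le> (real p / (real p - 1)) / Fp p b"
    by (rule divide_right_mono[OF Fp_le[OF assms]]) (use Fp_pos[OF assms, of b] in simp)
  also have "\<dots> = real (p^(b+1)) / real (p^(b+1)-1)"
  proof -
    define y where "y = real p ^ b"
    have n1: "real p * y - 1 \<noteq> 0" "y \<noteq> 0" "real p - 1 \<noteq> 0"
      using p2 p3 unfolding y_def by auto
    have "(real p / (real p - 1)) / ((real p * y - 1) / (y * (real p - 1))) = real p * y / (real p * y - 1)"
      using n1 by (simp add: divide_simps)
    moreover have "real (p^(b+1)) = real p * y" "real (p^(b+1)-1) = real p * y - 1"
      using p1 unfolding y_def by (simp_all add: of_nat_diff)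
    ultimately show ?thesis unfolding Fp_closed[OF assms] power_Suc y_def by simp
  qed
  finally show ?thesis .
qed

lemma frac_le_nat: "(a::nat) * d \<le> c * b \<Longrightarrow> b > 0 \<Longrightarrow> d > 0 \<Longrightarrow> real a / real b \<le> real c / real d"
proof -
  assume h: "a * d \<le> c * b" "b > 0" "d > 0"
  have "real a * real d \<le> real c * real b" using h(1) by (metis of_nat_le_iff of_nat_mult)
  then show ?thesis using h by (simp add: divide_simps)
qed

lemma sq_step: "(N::nat)^2 * D' \<le> N' * D^2 \<Longrightarrow> D > 0 \<Longrightarrow> D' > 0 \<Longrightarrow> (real N / real D)^2 \<le> real N' / real D'"
  using frac_le_nat[of "N^2" D' N' "D^2"] by (simp add: power_divide)

lemma chain144:
  fixes A B Na Da Nb Db Nc Dc Nd Dd Ne De Nf Df Ng Dg Nh Dh :: nat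
  assumes "A*Da \<le> Na*B" "B>0" "Da>0"
   "Na^2*Db \<le> Nb*Da^2" "Db>0"
   "Nb^2*Dc \<le> Nc*Db^2" "Dc>0"
   "Nc^2*Dd \<le> Nd*Dc^2" "Dd>0"
   "Nd^2*De \<le> Ne*Dd^2" "De>0"
   "Ne^2*Df \<le> Nf*De^2" "Df>0"
   "Nf^2*Dg \<le> Ng*Df^2" "Dg>0"
   "Ng^2*Dh \<le> Nh*Dg^2" "Dh>0"
  shows "(real A/real B)^144 \<le> real Nh/real Dh * (real Ne/real De)"
proof -
  define x where "x = real A / real B"
  have x0: "0 \<le> x" unfolding x_def by simp
  have u0: "x \<le> real Na / real Da" unfolding x_def using assms frac_le_nat by blast
  have s: "\<And>y u v::real. 0 \<le> y \<Longrightarrow> y \<le> u \<Longrightarrow> u^2 \<le> v \<Longrightarrow> y^2 \<le> v"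
    by (meson order_trans power_mono)
  have e1: "x^2 \<le> real Nb/real Db" using s[OF x0 u0 sq_step[OF assms(4,3,5)]] .
  have e2: "(x^2)^2 \<le> real Nc/real Dc" using s[OF _ e1 sq_step[OF assms(6,5,7)]] by simp
  have e3: "((x^2)^2)^2 \<le> real Nd/real Dd" using s[OF _ e2 sq_step[OF assms(8,7,9)]] by simp
  have e4: "(((x^2)^2)^2)^2 \<le> real Ne/real De" using s[OF _ e3 sq_step[OF assms(10,9,11)]] by simp
  have e5: "((((x^2)^2)^2)^2)^2 \<le> real Nf/real Df" using s[OF _ e4 sq_step[OF assms(12,11,13)]] by simp
  have e6: "(((((x^2)^2)^2)^2)^2)^2 \<le> real Ng/real Dg" using s[OF _ e5 sq_step[OF assms(14,13,15)]] by simp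
  have e7: "((((((x^2)^2)^2)^2)^2)^2)^2 \<le> real Nh/real Dh" using s[OF _ e6 sq_step[OF assms(16,15,17)]] by simp
  have a7: "x^128 \<le> real Nh/real Dh" using e7 by (simp add: power_mult[symmetric])
  have a4: "x^16 \<le> real Ne/real De" using e4 by (simp add: power_mult[symmetric])
  have "x^144 = x^128 * x^16" by (simp add: power_add[symmetric])
  also have "\<dots> \<le> real Nh/real Dh * (real Ne/real De)"
    using a7 a4 x0 by (intro mult_mono) auto
  finally show ?thesis unfolding x_def .
qed

definition dl :: real where "dl = real 224403121196654400 / real 614889782588491410"

lemma expl:
  fixes A B N4 D4 N7 D7 CN CD :: nat
  assumes "prime p" "A = (p^(a+1)-1)*p^b" "B = (p^(b+1)-1)*p^a"
    "(real A / real B)^144 \<le> real N7/real D7 * (real N4/real D4)"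
    "N7*N4*p^b*CD \<le> CN*(D7*D4*p^a)" "D7>0" "D4>0" "CD>0"
  shows "Hh p a \<le> real CN/real CD * Hh p b"
proof -
  have pp: "real p > 0" using prime_gt_0_nat[OF assms(1)] by simp
  have ho: "Hh p b > 0" using Hh_pos[OF assms(1)] .
  have "Hh p a / Hh p b = (Fp p a / Fp p b)^144 * real p ^ b / real p ^ a"
    unfolding Hh_def using Fp_pos[OF assms(1)] pp by (simp add: field_simps power_divide)
  also have "\<dots> = (real A / real B)^144 * real p ^ b / real p ^ a"
    using Fp_ratio[OF assms(1)] assms(2,3) by simp
  also have "\<dots> \<le> real N7/real D7 * (real N4/real D4) * real p ^ b / real p ^ a"
    using assms(4) pp by (intro divide_right_mono mult_right_mono) auto
  also have "\<dots> = real (N7*N4*p^b) / real (D7*D4*p^a)" by simp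
  also have "\<dots> \<le> real CN / real CD"
    using frac_le_nat[OF assms(5)] assms(6,7,8) prime_gt_0_nat[OF assms(1)] by simp
  finally show ?thesis using ho by (simp add: divide_le_eq)
qed

lemma tail:
  fixes A B N4 D4 N7 D7 CN CD :: nat
  assumes "prime p" "A = p^(b+1)" "B = p^(b+1)-1"
    "(real A / real B)^144 \<le> real N7/real D7 * (real N4/real D4)"
    "N7*N4*p^b*CD \<le> CN*(D7*D4*p^t)" "D7>0" "D4>0" "CD>0" "t \<le> a"
  shows "Hh p a \<le> real CN/real CD * Hh p b"
proof -
  have pp: "real p > 0" using prime_gt_0_nat[OF assms(1)] by simp
  have p1: "real p \<ge> 1" using prime_gt_0_nat[OF assms(1)] by simp
  have ho: "Hh p b > 0" using Hh_pos[OF assms(1)] .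
  have "Hh p a / Hh p b = (Fp p a / Fp p b)^144 * real p ^ b / real p ^ a"
    unfolding Hh_def using Fp_pos[OF assms(1)] pp by (simp add: field_simps power_divide)
  also have "\<dots> \<le> (real A / real B)^144 * real p ^ b / real p ^ a"
    using Fp_ratio_le[OF assms(1), of a b] assms(2,3) Fp_pos[OF assms(1), of a] Fp_pos[OF assms(1), of b] pp
    by (intro divide_right_mono mult_right_mono power_mono) auto
  also have "\<dots> \<le> real N7/real D7 * (real N4/real D4) * real p ^ b / real p ^ a"
    using assms(4) pp by (intro divide_right_mono mult_right_mono) auto
  also have "\<dots> \<le> real N7/real D7 * (real N4/real D4) * real p ^ b / real p ^ t"
    using assms(9) p1 pp by (intro divide_left_mono mult_nonneg_nonneg power_increasing) auto
  also have "\<dots> = real (N7*N4*p^b) / real (D7*D4*p^t)" by simp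
  also have "\<dots> \<le> real CN / real CD"
    using frac_le_nat[OF assms(5)] assms(6,7,8) prime_gt_0_nat[OF assms(1)] by simp
  finally show ?thesis using ho by (simp add: divide_le_eq)
qed




definition oo :: "nat \<Rightarrow> nat" where
  "oo p = (if p = 2 then 6 else if p = 3 then 4 else if p = 5 \<or> p = 7 then 2
     else if p \<in> {11,13,17,19,23,29,31,37} then 1 else 0)"

definition good :: "nat \<Rightarrow> nat \<Rightarrow> bool" where
  "good p a = (if p = 2 then 5 \<le> a \<and> a \<le> 8 else if p = 3 then 3 \<le> a \<and> a \<le> 5
     else if p = 5 then 2 \<le> a \<and> a \<le> 3 else if p = 7 then 1 \<le> a \<and> a \<le> 2
     else if p \<in> {37,41,43,47} then a \<le> 1 else a = oo p)"

lemma dl_le1: "dl \<le> 1" unfolding dl_def by simp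
lemma dl_pos: "dl > 0" unfolding dl_def by simp

lemma le_dl: "x \<le> dl * y \<Longrightarrow> 0 < y \<Longrightarrow> x \<le> y"
proof -
  assume h1: "x \<le> dl * y" and h2: "0 < y"
  have "dl * y \<le> 1 * y" by (rule mult_right_mono[OF dl_le1]) (use h2 in simp)
  then show ?thesis using h1 by simp
qed

lemma pr2: "prime (2::nat)" by code_simp
lemma pr3: "prime (3::nat)" by code_simp
lemma pr5: "prime (5::nat)" by code_simp
lemma pr7: "prime (7::nat)" by code_simp
lemma pr11: "prime (11::nat)" by code_simp
lemma pr13: "prime (13::nat)" by code_simp
lemma pr17: "prime (17::nat)" by code_simp
lemma pr19: "prime (19::nat)" by code_simp
lemma pr23: "prime (23::nat)" by code_simp
lemma pr29: "prime (29::nat)" by code_simp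
lemma pr31: "prime (31::nat)" by code_simp
lemma pr37: "prime (37::nat)" by code_simp
lemma pr41: "prime (41::nat)" by code_simp
lemma pr43: "prime (43::nat)" by code_simp
lemma pr47: "prime (47::nat)" by code_simp

lemma e_2_0: "Hh 2 0 \<le> Hh 2 6 \<and> (\<not> good 2 0 \<longrightarrow> Hh 2 0 \<le> dl * Hh 2 6)"
proof -
  have c: "(real 64 / real 127)^144 \<le> real 1/real 16777216 * (real 76081660/real 4398046511104)"
    by (rule chain144[where A=64 and B=127 and Na=67637281 and Da=134217728 and Nb=68169859 and Db=268435456 and Nc=69247629 and Dc=1073741824 and Nd=71454557 and Dd=17179869184 and Ne=76081660 and De=4398046511104 and Nf=1 and Df=16777216 and Ng=1 and Dg=16777216 and Nh=1 and Dh=16777216]) simp_all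
  have h: "Hh 2 0 \<le> real 224403121196654400/real 614889782588491410 * Hh 2 6"
    by (rule expl[OF _ _ _ c]) (simp_all add: pr2)
  have h2: "Hh 2 0 \<le> dl * Hh 2 6" using h by (simp add: dl_def)
  show ?thesis using h2 le_dl[OF h2 Hh_pos[OF pr2]] by simp
qed

lemma e_2_1: "Hh 2 1 \<le> Hh 2 6 \<and> (\<not> good 2 1 \<longrightarrow> Hh 2 1 \<le> dl * Hh 2 6)"
proof -
  have c: "(real 192 / real 254)^144 \<le> real 1/real 16777216 * (real 97604565/real 8589934592)"
    by (rule chain144[where A=192 and B=254 and Na=101455921 and Da=134217728 and Nb=76691091 and Db=134217728 and Nc=87641529 and Dc=268435456 and Nd=114456380 and Dd=1073741824 and Ne=97604565 and De=8589934592 and Nf=70979082 and Df=549755813888 and Ng=1 and Dg=16777216 and Nh=1 and Dh=16777216]) simp_all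
  have h: "Hh 2 1 \<le> real 224403121196654400/real 614889782588491410 * Hh 2 6"
    by (rule expl[OF _ _ _ c]) (simp_all add: pr2)
  have h2: "Hh 2 1 \<le> dl * Hh 2 6" using h by (simp add: dl_def)
  show ?thesis using h2 le_dl[OF h2 Hh_pos[OF pr2]] by simp
qed

lemma e_2_2: "Hh 2 2 \<le> Hh 2 6 \<and> (\<not> good 2 2 \<longrightarrow> Hh 2 2 \<le> dl * Hh 2 6)"
proof -
  have c: "(real 448 / real 508)^144 \<le> real 116019462/real 1125899906842624 * (real 71861910/real 536870912)"
    by (rule chain144[where A=448 and B=508 and Na=118365241 and Da=134217728 and Nb=104385095 and Db=134217728 and Nc=81183375 and Dc=134217728 and Nd=98209685 and Dd=268435456 and Ne=71861910 and De=536870912 and Nf=76951595 and Df=4294967296 and Ng=88237941 and Dg=274877906944 and Nh=116019462 and Dh=1125899906842624]) simp_all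
  have h: "Hh 2 2 \<le> real 224403121196654400/real 614889782588491410 * Hh 2 6"
    by (rule expl[OF _ _ _ c]) (simp_all add: pr2)
  have h2: "Hh 2 2 \<le> dl * Hh 2 6" using h by (simp add: dl_def)
  show ?thesis using h2 le_dl[OF h2 Hh_pos[OF pr2]] by simp
qed

lemma e_2_3: "Hh 2 3 \<le> Hh 2 6 \<and> (\<not> good 2 3 \<longrightarrow> Hh 2 3 \<le> dl * Hh 2 6)"
proof -
  have c: "(real 960 / real 1016)^144 \<le> real 96924484/real 137438953472 * (real 108362829/real 268435456)"
    by (rule chain144[where A=960 and B=1016 and Na=126819901 and Da=134217728 and Nb=119829829 and Db=134217728 and Nc=106984287 and Dc=134217728 and Nd=85276646 and Dd=134217728 and Ne=108362829 and De=268435456 and Nf=87488463 and Df=536870912 and Ng=114056933 and Dg=4294967296 and Nh=96924484 and Dh=137438953472]) simp_all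
  have h: "Hh 2 3 \<le> real 224403121196654400/real 614889782588491410 * Hh 2 6"
    by (rule expl[OF _ _ _ c]) (simp_all add: pr2)
  have h2: "Hh 2 3 \<le> dl * Hh 2 6" using h by (simp add: dl_def)
  show ?thesis using h2 le_dl[OF h2 Hh_pos[OF pr2]] by simp
qed

lemma e_2_4: "Hh 2 4 \<le> Hh 2 6 \<and> (\<not> good 2 4 \<longrightarrow> Hh 2 4 \<le> dl * Hh 2 6)"
proof -
  have c: "(real 1984 / real 2032)^144 \<le> real 100700054/real 2147483648 * (real 91558224/real 134217728)"
    by (rule chain144[where A=1984 and B=2032 and Na=131047231 and Da=134217728 and Nb=127951628 and Db=134217728 and Nc=121978068 and Dc=134217728 and Nd=110854575 and Dd=134217728 and Ne=91558224 and De=134217728 and Nf=124915070 and Df=268435456 and Ng=116257182 and Dg=536870912 and Nh=100700054 and Dh=2147483648]) simp_all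
  have h: "Hh 2 4 \<le> real 224403121196654400/real 614889782588491410 * Hh 2 6"
    by (rule expl[OF _ _ _ c]) (simp_all add: pr2)
  have h2: "Hh 2 4 \<le> dl * Hh 2 6" using h by (simp add: dl_def)
  show ?thesis using h2 le_dl[OF h2 Hh_pos[OF pr2]] by simp
qed

lemma e_2_5: "Hh 2 5 \<le> Hh 2 6 \<and> (\<not> good 2 5 \<longrightarrow> Hh 2 5 \<le> dl * Hh 2 6)"
proof -
  have c: "(real 4032 / real 4064)^144 \<le> real 97587411/real 268435456 * (real 118271232/real 134217728)"
    by (rule chain144[where A=4032 and B=4064 and Na=133160896 and Da=134217728 and Nb=132112386 and Db=134217728 and Nc=130040069 and Dc=134217728 and Nd=125992444 and Dd=134217728 and Ne=118271232 and De=134217728 and Nf=104219350 and Df=134217728 and Ng=80925770 and Dg=134217728 and Nh=97587411 and Dh=268435456]) simp_all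
  have h: "Hh 2 5 \<le> real 1/real 1 * Hh 2 6"
    by (rule expl[OF _ _ _ c]) (simp_all add: pr2)
  show ?thesis using h by (simp add: good_def oo_def)
qed

lemma e_2_7: "Hh 2 7 \<le> Hh 2 6 \<and> (\<not> good 2 7 \<longrightarrow> Hh 2 7 \<le> dl * Hh 2 6)"
proof -
  have c: "(real 16320 / real 16256)^144 \<le> real 110970748/real 67108864 * (real 71463365/real 67108864)"
    by (rule chain144[where A=16320 and B=16256 and Na=67373073 and Da=67108864 and Nb=67638323 and Db=67108864 and Nc=68171960 and Dc=67108864 and Nd=69251897 and Dd=67108864 and Ne=71463365 and De=67108864 and Nf=76100418 and Df=67108864 and Ng=86296702 and Dg=67108864 and Nh=110970748 and Dh=67108864]) simp_all
  have h: "Hh 2 7 \<le> real 1/real 1 * Hh 2 6"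
    by (rule expl[OF _ _ _ c]) (simp_all add: pr2)
  show ?thesis using h by (simp add: good_def oo_def)
qed

lemma e_2_8: "Hh 2 8 \<le> Hh 2 6 \<and> (\<not> good 2 8 \<longrightarrow> Hh 2 8 \<le> dl * Hh 2 6)"
proof -
  have c: "(real 32704 / real 32512)^144 \<le> real 71296980/real 33554432 * (real 73738626/real 67108864)"
    by (rule chain144[where A=32704 and B=32512 and Na=67505177 and Da=67108864 and Nb=67903831 and Db=67108864 and Nc=68708216 and Dc=67108864 and Nd=70345685 and Dd=67108864 and Ne=73738626 and De=67108864 and Nf=81023350 and Df=67108864 and Ng=97822894 and Dg=67108864 and Nh=71296980 and Dh=33554432]) simp_all
  have h: "Hh 2 8 \<le> real 1/real 1 * Hh 2 6"
    by (rule expl[OF _ _ _ c]) (simp_all add: pr2)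
  show ?thesis using h by (simp add: good_def oo_def)
qed

lemma e_2_9: "Hh 2 9 \<le> Hh 2 6 \<and> (\<not> good 2 9 \<longrightarrow> Hh 2 9 \<le> dl * Hh 2 6)"
proof -
  have c: "(real 65472 / real 65024)^144 \<le> real 80804853/real 33554432 * (real 74901554/real 67108864)"
    by (rule chain144[where A=65472 and B=65024 and Na=67571229 and Da=67108864 and Nb=68036780 and Db=67108864 and Nc=68977527 and Dc=67108864 and Nd=70898224 and Dd=67108864 and Ne=74901554 and De=67108864 and Nf=83599133 and Df=67108864 and Ng=104141460 and Dg=67108864 and Nh=80804853 and Dh=33554432]) simp_all
  have h: "Hh 2 9 \<le> real 224403121196654400/real 614889782588491410 * Hh 2 6"
    by (rule expl[OF _ _ _ c]) (simp_all add: pr2)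
  have h2: "Hh 2 9 \<le> dl * Hh 2 6" using h by (simp add: dl_def)
  show ?thesis using h2 le_dl[OF h2 Hh_pos[OF pr2]] by simp
qed

lemma t_2: "10 \<le> a \<Longrightarrow> Hh 2 a \<le> Hh 2 6 \<and> (\<not> good 2 a \<longrightarrow> Hh 2 a \<le> dl * Hh 2 6)"
proof -
  assume ta: "10 \<le> a"
  have c: "(real 128 / real 127)^144 \<le> real 91569459/real 33554432 * (real 76081660/real 67108864)"
    by (rule chain144[where A=128 and B=127 and Na=67637281 and Da=67108864 and Nb=68169859 and Db=67108864 and Nc=69247629 and Dc=67108864 and Nd=71454557 and Dd=67108864 and Ne=76081660 and De=67108864 and Nf=86254165 and Df=67108864 and Ng=110861376 and Dg=67108864 and Nh=91569459 and Dh=33554432]) simp_all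
  have h: "Hh 2 a \<le> real 224403121196654400/real 614889782588491410 * Hh 2 6"
    by (rule tail[OF _ _ _ c _ _ _ _ ta]) (simp_all add: pr2)
  have h2: "Hh 2 a \<le> dl * Hh 2 6" using h by (simp add: dl_def)
  show ?thesis using h2 le_dl[OF h2 Hh_pos[OF pr2]] by simp
qed

lemma P_2: "Hh 2 a \<le> Hh 2 6 \<and> (\<not> good 2 a \<longrightarrow> Hh 2 a \<le> dl * Hh 2 6)"
proof (cases "a < 10")
  case True
  then have "a = 0 \<or> a = 1 \<or> a = 2 \<or> a = 3 \<or> a = 4 \<or> a = 5 \<or> a = 6 \<or> a = 7 \<or> a = 8 \<or> a = 9" by presburger
  then show ?thesis using e_2_0 e_2_1 e_2_2 e_2_3 e_2_4 e_2_5 e_2_7 e_2_8 e_2_9 by (auto simp: good_def oo_def)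
next
  case False
  then show ?thesis using t_2 by simp
qed

lemma e_3_0: "Hh 3 0 \<le> Hh 3 4 \<and> (\<not> good 3 0 \<longrightarrow> Hh 3 0 \<le> dl * Hh 3 4)"
proof -
  have c: "(real 162 / real 242)^144 \<le> real 1/real 16777216 * (real 111756894/real 68719476736)"
    by (rule chain144[where A=162 and B=242 and Na=89848232 and Da=134217728 and Nb=120292676 and Db=268435456 and Nc=107812345 and Dc=536870912 and Nd=86601837 and Dd=2147483648 and Ne=111756894 and De=68719476736 and Nf=93054797 and Df=35184372088832 and Ng=1 and Dg=16777216 and Nh=1 and Dh=16777216]) simp_all
  have h: "Hh 3 0 \<le> real 224403121196654400/real 614889782588491410 * Hh 3 4"
    by (rule expl[OF _ _ _ c]) (simp_all add: pr3)
  have h2: "Hh 3 0 \<le> dl * Hh 3 4" using h by (simp add: dl_def)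
  show ?thesis using h2 le_dl[OF h2 Hh_pos[OF pr3]] by simp
qed

lemma e_3_1: "Hh 3 1 \<le> Hh 3 4 \<and> (\<not> good 3 1 \<longrightarrow> Hh 3 1 \<le> dl * Hh 3 4)"
proof -
  have c: "(real 648 / real 726)^144 \<le> real 67627548/real 140737488355328 * (real 87113227/real 536870912)"
    by (rule chain144[where A=648 and B=726 and Na=119797642 and Da=134217728 and Nb=106926822 and Db=134217728 and Nc=85185061 and Dc=134217728 and Nd=108130196 and Dd=268435456 and Ne=87113227 and De=536870912 and Nf=113080656 and Df=4294967296 and Ng=95272324 and Dg=137438953472 and Nh=67627548 and Dh=140737488355328]) simp_all
  have h: "Hh 3 1 \<le> real 224403121196654400/real 614889782588491410 * Hh 3 4"
    by (rule expl[OF _ _ _ c]) (simp_all add: pr3)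
  have h2: "Hh 3 1 \<le> dl * Hh 3 4" using h by (simp add: dl_def)
  show ?thesis using h2 le_dl[OF h2 Hh_pos[OF pr3]] by simp
qed

lemma e_3_2: "Hh 3 2 \<le> Hh 3 4 \<and> (\<not> good 3 2 \<longrightarrow> Hh 3 2 \<le> dl * Hh 3 4)"
proof -
  have c: "(real 2106 / real 2178)^144 \<le> real 116212619/real 8589934592 * (real 78382265/real 134217728)"
    by (rule chain144[where A=2106 and B=2178 and Na=129780779 and Da=134217728 and Nb=125490506 and Db=134217728 and Nc=117330754 and Dc=134217728 and Nd=102568462 and Dd=134217728 and Ne=78382265 and De=134217728 and Nf=91549449 and Df=268435456 and Ng=124891127 and Dg=1073741824 and Nh=116212619 and Dh=8589934592]) simp_all
  have h: "Hh 3 2 \<le> real 224403121196654400/real 614889782588491410 * Hh 3 4"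
    by (rule expl[OF _ _ _ c]) (simp_all add: pr3)
  have h2: "Hh 3 2 \<le> dl * Hh 3 4" using h by (simp add: dl_def)
  show ?thesis using h2 le_dl[OF h2 Hh_pos[OF pr3]] by simp
qed

lemma e_3_3: "Hh 3 3 \<le> Hh 3 4 \<and> (\<not> good 3 3 \<longrightarrow> Hh 3 3 \<le> dl * Hh 3 4)"
proof -
  have c: "(real 6480 / real 6534)^144 \<le> real 92792399/real 268435456 * (real 117528704/real 134217728)"
    by (rule chain144[where A=6480 and B=6534 and Na=133108491 and Da=134217728 and Nb=132008422 and Db=134217728 and Nc=129835483 and Dc=134217728 and Nd=125596320 and Dd=134217728 and Ne=117528704 and De=134217728 and Nf=102914842 and Df=134217728 and Ng=78912562 and Dg=134217728 and Nh=92792399 and Dh=268435456]) simp_all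
  have h: "Hh 3 3 \<le> real 1/real 1 * Hh 3 4"
    by (rule expl[OF _ _ _ c]) (simp_all add: pr3)
  show ?thesis using h by (simp add: good_def oo_def)
qed

lemma e_3_5: "Hh 3 5 \<le> Hh 3 4 \<and> (\<not> good 3 5 \<longrightarrow> Hh 3 5 \<le> dl * Hh 3 4)"
proof -
  have c: "(real 58968 / real 58806)^144 \<le> real 95435401/real 67108864 * (real 70128748/real 67108864)"
    by (rule chain144[where A=58968 and B=58806 and Na=67293737 and Da=67108864 and Nb=67479120 and Db=67108864 and Nc=67851419 and Dc=67108864 and Nd=68602191 and Dd=67108864 and Ne=70128748 and De=67108864 and Nf=73284527 and Df=67108864 and Ng=80028503 and Dg=67108864 and Nh=95435401 and Dh=67108864]) simp_all
  have h: "Hh 3 5 \<le> real 1/real 1 * Hh 3 4"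
    by (rule expl[OF _ _ _ c]) (simp_all add: pr3)
  show ?thesis using h by (simp add: good_def oo_def)
qed

lemma t_3: "6 \<le> a \<Longrightarrow> Hh 3 a \<le> Hh 3 4 \<and> (\<not> good 3 a \<longrightarrow> Hh 3 a \<le> dl * Hh 3 4)"
proof -
  assume ta: "6 \<le> a"
  have c: "(real 243 / real 242)^144 \<le> real 113767142/real 67108864 * (real 71686026/real 67108864)"
    by (rule chain144[where A=243 and B=242 and Na=67386174 and Da=67108864 and Nb=67664630 and Db=67108864 and Nc=68224999 and Dc=67108864 and Nd=69359698 and Dd=67108864 and Ne=71686026 and De=67108864 and Nf=76575374 and Df=67108864 and Ng=87377249 and Dg=67108864 and Nh=113767142 and Dh=67108864]) simp_all
  have h: "Hh 3 a \<le> real 224403121196654400/real 614889782588491410 * Hh 3 4"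
    by (rule tail[OF _ _ _ c _ _ _ _ ta]) (simp_all add: pr3)
  have h2: "Hh 3 a \<le> dl * Hh 3 4" using h by (simp add: dl_def)
  show ?thesis using h2 le_dl[OF h2 Hh_pos[OF pr3]] by simp
qed

lemma P_3: "Hh 3 a \<le> Hh 3 4 \<and> (\<not> good 3 a \<longrightarrow> Hh 3 a \<le> dl * Hh 3 4)"
proof (cases "a < 6")
  case True
  then have "a = 0 \<or> a = 1 \<or> a = 2 \<or> a = 3 \<or> a = 4 \<or> a = 5" by presburger
  then show ?thesis using e_3_0 e_3_1 e_3_2 e_3_3 e_3_5 by (auto simp: good_def oo_def)
next
  case False
  then show ?thesis using t_3 by simp
qed

lemma e_5_0: "Hh 5 0 \<le> Hh 5 2 \<and> (\<not> good 5 0 \<longrightarrow> Hh 5 0 \<le> dl * Hh 5 2)"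
proof -
  have c: "(real 100 / real 124)^144 \<le> real 1/real 16777216 * (real 68735802/real 2147483648)"
    by (rule chain144[where A=100 and B=124 and Na=108240104 and Da=134217728 and Nb=87290408 and Db=134217728 and Nc=113541117 and Dc=268435456 and Nd=96049795 and Dd=536870912 and Ne=68735802 and De=2147483648 and Nf=70402183 and Df=68719476736 and Ng=73857120 and Dg=70368744177664 and Nh=1 and Dh=16777216]) simp_all
  have h: "Hh 5 0 \<le> real 224403121196654400/real 614889782588491410 * Hh 5 2"
    by (rule expl[OF _ _ _ c]) (simp_all add: pr5)
  have h2: "Hh 5 0 \<le> dl * Hh 5 2" using h by (simp add: dl_def)
  show ?thesis using h2 le_dl[OF h2 Hh_pos[OF pr5]] by simp
qed

lemma e_5_1: "Hh 5 1 \<le> Hh 5 2 \<and> (\<not> good 5 1 \<longrightarrow> Hh 5 1 \<le> dl * Hh 5 2)"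
proof -
  have c: "(real 600 / real 620)^144 \<le> real 129185542/real 8589934592 * (real 79426036/real 134217728)"
    by (rule chain144[where A=600 and B=620 and Na=129888124 and Da=134217728 and Nb=125698185 and Db=134217728 and Nc=117719425 and Dc=134217728 and Nd=103249126 and Dd=134217728 and Ne=79426036 and De=134217728 and Nf=94003904 and Df=268435456 and Ng=131677598 and Dg=1073741824 and Nh=129185542 and Dh=8589934592]) simp_all
  have h: "Hh 5 1 \<le> real 224403121196654400/real 614889782588491410 * Hh 5 2"
    by (rule expl[OF _ _ _ c]) (simp_all add: pr5)
  have h2: "Hh 5 1 \<le> dl * Hh 5 2" using h by (simp add: dl_def)
  show ?thesis using h2 le_dl[OF h2 Hh_pos[OF pr5]] by simp
qed

lemma e_5_3: "Hh 5 3 \<le> Hh 5 2 \<and> (\<not> good 5 3 \<longrightarrow> Hh 5 3 \<le> dl * Hh 5 2)"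
proof -
  have c: "(real 15600 / real 15500)^144 \<le> real 76426160/real 33554432 * (real 74381752/real 67108864)"
    by (rule chain144[where A=15600 and B=15500 and Na=67541825 and Da=67108864 and Nb=67977580 and Db=67108864 and Nc=68857542 and Dc=67108864 and Nd=70651786 and Dd=67108864 and Ne=74381752 and De=67108864 and Nf=82442836 and Df=67108864 and Ng=101280529 and Dg=67108864 and Nh=76426160 and Dh=33554432]) simp_all
  have h: "Hh 5 3 \<le> real 1/real 1 * Hh 5 2"
    by (rule expl[OF _ _ _ c]) (simp_all add: pr5)
  show ?thesis using h by (simp add: good_def oo_def)
qed

lemma t_5: "4 \<le> a \<Longrightarrow> Hh 5 a \<le> Hh 5 2 \<and> (\<not> good 5 a \<longrightarrow> Hh 5 a \<le> dl * Hh 5 2)"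
proof -
  assume ta: "4 \<le> a"
  have c: "(real 125 / real 124)^144 \<le> real 93811630/real 33554432 * (real 76312070/real 67108864)"
    by (rule chain144[where A=125 and B=124 and Na=67650065 and Da=67108864 and Nb=68195631 and Db=67108864 and Nc=69299998 and Dc=67108864 and Nd=71562674 and Dd=67108864 and Ne=76312070 and De=67108864 and Nf=86777390 and Df=67108864 and Ng=112210444 and Dg=67108864 and Nh=93811630 and Dh=33554432]) simp_all
  have h: "Hh 5 a \<le> real 224403121196654400/real 614889782588491410 * Hh 5 2"
    by (rule tail[OF _ _ _ c _ _ _ _ ta]) (simp_all add: pr5)
  have h2: "Hh 5 a \<le> dl * Hh 5 2" using h by (simp add: dl_def)
  show ?thesis using h2 le_dl[OF h2 Hh_pos[OF pr5]] by simp
qed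

lemma P_5: "Hh 5 a \<le> Hh 5 2 \<and> (\<not> good 5 a \<longrightarrow> Hh 5 a \<le> dl * Hh 5 2)"
proof (cases "a < 4")
  case True
  then have "a = 0 \<or> a = 1 \<or> a = 2 \<or> a = 3" by presburger
  then show ?thesis using e_5_0 e_5_1 e_5_3 by (auto simp: good_def oo_def)
next
  case False
  then show ?thesis using t_5 by simp
qed

lemma e_7_0: "Hh 7 0 \<le> Hh 7 2 \<and> (\<not> good 7 0 \<longrightarrow> Hh 7 0 \<le> dl * Hh 7 2)"
proof -
  have c: "(real 294 / real 342)^144 \<le> real 1/real 16777216 * (real 95507958/real 1073741824)"
    by (rule chain144[where A=294 and B=342 and Na=115380153 and Da=134217728 and Nb=99186449 and Db=134217728 and Nc=73298452 and Dc=134217728 and Nd=80058919 and Dd=268435456 and Ne=95507958 and De=1073741824 and Nf=67962483 and Df=8589934592 and Ng=68826960 and Dg=1099511627776 and Nh=1 and Dh=16777216]) simp_all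
  have h: "Hh 7 0 \<le> real 224403121196654400/real 614889782588491410 * Hh 7 2"
    by (rule expl[OF _ _ _ c]) (simp_all add: pr7)
  have h2: "Hh 7 0 \<le> dl * Hh 7 2" using h by (simp add: dl_def)
  show ?thesis using h2 le_dl[OF h2 Hh_pos[OF pr7]] by simp
qed

lemma e_7_1: "Hh 7 1 \<le> Hh 7 2 \<and> (\<not> good 7 1 \<longrightarrow> Hh 7 1 \<le> dl * Hh 7 2)"
proof -
  have c: "(real 2352 / real 2394)^144 \<le> real 111425985/real 1073741824 * (real 101116192/real 134217728)"
    by (rule chain144[where A=2352 and B=2394 and Na=131863032 and Da=134217728 and Nb=129549647 and Db=134217728 and Nc=125043922 and Dc=134217728 and Nd=116497148 and Dd=134217728 and Ne=101116192 and De=134217728 and Nf=76178345 and Df=134217728 and Ng=86473529 and Dg=268435456 and Nh=111425985 and Dh=1073741824]) simp_all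
  have h: "Hh 7 1 \<le> real 1/real 1 * Hh 7 2"
    by (rule expl[OF _ _ _ c]) (simp_all add: pr7)
  show ?thesis using h by (simp add: good_def oo_def)
qed

lemma t_7: "3 \<le> a \<Longrightarrow> Hh 7 a \<le> Hh 7 2 \<and> (\<not> good 7 a \<longrightarrow> Hh 7 a \<le> dl * Hh 7 2)"
proof -
  assume ta: "3 \<le> a"
  have c: "(real 343 / real 342)^144 \<le> real 97518314/real 67108864 * (real 70318269/real 67108864)"
    by (rule chain144[where A=343 and B=342 and Na=67305089 and Da=67108864 and Nb=67501888 and Db=67108864 and Nc=67897214 and Dc=67108864 and Nd=68694826 and Dd=67108864 and Ne=70318269 and De=67108864 and Nf=73681161 and Df=67108864 and Ng=80897115 and Dg=67108864 and Nh=97518314 and Dh=67108864]) simp_all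
  have h: "Hh 7 a \<le> real 224403121196654400/real 614889782588491410 * Hh 7 2"
    by (rule tail[OF _ _ _ c _ _ _ _ ta]) (simp_all add: pr7)
  have h2: "Hh 7 a \<le> dl * Hh 7 2" using h by (simp add: dl_def)
  show ?thesis using h2 le_dl[OF h2 Hh_pos[OF pr7]] by simp
qed

lemma P_7: "Hh 7 a \<le> Hh 7 2 \<and> (\<not> good 7 a \<longrightarrow> Hh 7 a \<le> dl * Hh 7 2)"
proof (cases "a < 3")
  case True
  then have "a = 0 \<or> a = 1 \<or> a = 2" by presburger
  then show ?thesis using e_7_0 e_7_1 by (auto simp: good_def oo_def)
next
  case False
  then show ?thesis using t_7 by simp
qed

lemma e_11_0: "Hh 11 0 \<le> Hh 11 1 \<and> (\<not> good 11 0 \<longrightarrow> Hh 11 0 \<le> dl * Hh 11 1)"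
proof -
  have c: "(real 110 / real 120)^144 \<le> real 128042637/real 8796093022208 * (real 133429842/real 536870912)"
    by (rule chain144[where A=110 and B=120 and Na=123032918 and Da=134217728 and Nb=112780176 and Db=134217728 and Nc=94766678 and Dc=134217728 and Nd=133823205 and Dd=268435456 and Ne=133429842 and De=536870912 and Nf=132646582 and Df=2147483648 and Ng=131093828 and Dg=34359738368 and Nh=128042637 and Dh=8796093022208]) simp_all
  have h: "Hh 11 0 \<le> real 224403121196654400/real 614889782588491410 * Hh 11 1"
    by (rule expl[OF _ _ _ c]) (simp_all add: pr11)
  have h2: "Hh 11 0 \<le> dl * Hh 11 1" using h by (simp add: dl_def)
  show ?thesis using h2 le_dl[OF h2 Hh_pos[OF pr11]] by simp
qed

lemma t_11: "2 \<le> a \<Longrightarrow> Hh 11 a \<le> Hh 11 1 \<and> (\<not> good 11 a \<longrightarrow> Hh 11 a \<le> dl * Hh 11 1)"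
proof -
  assume ta: "2 \<le> a"
  have c: "(real 121 / real 120)^144 \<le> real 97068577/real 33554432 * (real 76638321/real 67108864)"
    by (rule chain144[where A=121 and B=120 and Na=67668105 and Da=67108864 and Nb=68232007 and Db=67108864 and Nc=69373948 and Dc=67108864 and Nd=71715484 and Dd=67108864 and Ne=76638321 and De=67108864 and Nf=87520961 and Df=67108864 and Ng=114141683 and Dg=67108864 and Nh=97068577 and Dh=33554432]) simp_all
  have h: "Hh 11 a \<le> real 224403121196654400/real 614889782588491410 * Hh 11 1"
    by (rule tail[OF _ _ _ c _ _ _ _ ta]) (simp_all add: pr11)
  have h2: "Hh 11 a \<le> dl * Hh 11 1" using h by (simp add: dl_def)
  show ?thesis using h2 le_dl[OF h2 Hh_pos[OF pr11]] by simp
qed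

lemma P_11: "Hh 11 a \<le> Hh 11 1 \<and> (\<not> good 11 a \<longrightarrow> Hh 11 a \<le> dl * Hh 11 1)"
proof (cases "a < 2")
  case True
  then have "a = 0 \<or> a = 1" by presburger
  then show ?thesis using e_11_0 by (auto simp: good_def oo_def)
next
  case False
  then show ?thesis using t_11 by simp
qed

lemma e_13_0: "Hh 13 0 \<le> Hh 13 1 \<and> (\<not> good 13 0 \<longrightarrow> Hh 13 0 \<le> dl * Hh 13 1)"
proof -
  have c: "(real 156 / real 168)^144 \<le> real 83475856/real 1099511627776 * (real 82013436/real 268435456)"
    by (rule chain144[where A=156 and B=168 and Na=124630748 and Da=134217728 and Nb=115728553 and Db=134217728 and Nc=99786356 and Dc=134217728 and Nd=74187792 and Dd=134217728 and Ne=82013436 and De=268435456 and Nf=100228246 and Df=1073741824 and Ng=74846308 and Dg=8589934592 and Nh=83475856 and Dh=1099511627776]) simp_all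
  have h: "Hh 13 0 \<le> real 224403121196654400/real 614889782588491410 * Hh 13 1"
    by (rule expl[OF _ _ _ c]) (simp_all add: pr13)
  have h2: "Hh 13 0 \<le> dl * Hh 13 1" using h by (simp add: dl_def)
  show ?thesis using h2 le_dl[OF h2 Hh_pos[OF pr13]] by simp
qed

lemma t_13: "2 \<le> a \<Longrightarrow> Hh 13 a \<le> Hh 13 1 \<and> (\<not> good 13 a \<longrightarrow> Hh 13 a \<le> dl * Hh 13 1)"
proof -
  assume ta: "2 \<le> a"
  have c: "(real 169 / real 168)^144 \<le> real 71723367/real 33554432 * (real 73793606/real 67108864)"
    by (rule chain144[where A=169 and B=168 and Na=67508322 and Da=67108864 and Nb=67910158 and Db=67108864 and Nc=68721020 and Dc=67108864 and Nd=70371905 and Dd=67108864 and Ne=73793606 and De=67108864 and Nf=81144218 and Df=67108864 and Ng=98114970 and Dg=67108864 and Nh=71723367 and Dh=33554432]) simp_all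
  have h: "Hh 13 a \<le> real 224403121196654400/real 614889782588491410 * Hh 13 1"
    by (rule tail[OF _ _ _ c _ _ _ _ ta]) (simp_all add: pr13)
  have h2: "Hh 13 a \<le> dl * Hh 13 1" using h by (simp add: dl_def)
  show ?thesis using h2 le_dl[OF h2 Hh_pos[OF pr13]] by simp
qed

lemma P_13: "Hh 13 a \<le> Hh 13 1 \<and> (\<not> good 13 a \<longrightarrow> Hh 13 a \<le> dl * Hh 13 1)"
proof (cases "a < 2")
  case True
  then have "a = 0 \<or> a = 1" by presburger
  then show ?thesis using e_13_0 by (auto simp: good_def oo_def)
next
  case False
  then show ?thesis using t_13 by simp
qed

lemma e_17_0: "Hh 17 0 \<le> Hh 17 1 \<and> (\<not> good 17 0 \<longrightarrow> Hh 17 0 \<le> dl * Hh 17 1)"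
proof -
  have c: "(real 272 / real 288)^144 \<le> real 91346454/real 137438953472 * (real 107562926/real 268435456)"
    by (rule chain144[where A=272 and B=288 and Na=126761188 and Da=134217728 and Nb=119718901 and Db=134217728 and Nc=106786306 and Dc=134217728 and Nd=84961319 and Dd=134217728 and Ne=107562926 and De=268435456 and Nf=86201602 and Df=536870912 and Ng=110726300 and Dg=4294967296 and Nh=91346454 and Dh=137438953472]) simp_all
  have h: "Hh 17 0 \<le> real 224403121196654400/real 614889782588491410 * Hh 17 1"
    by (rule expl[OF _ _ _ c]) (simp_all add: pr17)
  have h2: "Hh 17 0 \<le> dl * Hh 17 1" using h by (simp add: dl_def)
  show ?thesis using h2 le_dl[OF h2 Hh_pos[OF pr17]] by simp
qed

lemma t_17: "2 \<le> a \<Longrightarrow> Hh 17 a \<le> Hh 17 1 \<and> (\<not> good 17 a \<longrightarrow> Hh 17 a \<le> dl * Hh 17 1)"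
proof -
  assume ta: "2 \<le> a"
  have c: "(real 289 / real 288)^144 \<le> real 104584159/real 67108864 * (real 70935827/real 67108864)"
    by (rule chain144[where A=289 and B=288 and Na=67341881 and Da=67108864 and Nb=67575708 and Db=67108864 and Nc=68045800 and Dc=67108864 and Nd=68995817 and Dd=67108864 and Ne=70935827 and De=67108864 and Nf=74981028 and Df=67108864 and Ng=83776632 and Dg=67108864 and Nh=104584159 and Dh=67108864]) simp_all
  have h: "Hh 17 a \<le> real 224403121196654400/real 614889782588491410 * Hh 17 1"
    by (rule tail[OF _ _ _ c _ _ _ _ ta]) (simp_all add: pr17)
  have h2: "Hh 17 a \<le> dl * Hh 17 1" using h by (simp add: dl_def)
  show ?thesis using h2 le_dl[OF h2 Hh_pos[OF pr17]] by simp
qed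

lemma P_17: "Hh 17 a \<le> Hh 17 1 \<and> (\<not> good 17 a \<longrightarrow> Hh 17 a \<le> dl * Hh 17 1)"
proof (cases "a < 2")
  case True
  then have "a = 0 \<or> a = 1" by presburger
  then show ?thesis using e_17_0 by (auto simp: good_def oo_def)
next
  case False
  then show ?thesis using t_17 by simp
qed

lemma e_19_0: "Hh 19 0 \<le> Hh 19 1 \<and> (\<not> good 19 0 \<longrightarrow> Hh 19 0 \<le> dl * Hh 19 1)"
proof -
  have c: "(real 342 / real 360)^144 \<le> real 96761310/real 68719476736 * (real 118145617/real 268435456)"
    by (rule chain144[where A=342 and B=360 and Na=127506842 and Da=134217728 and Nb=121131501 and Db=134217728 and Nc=109321181 and Dc=134217728 and Nd=89042788 and Dd=134217728 and Ne=118145617 and De=268435456 and Nf=103998086 and Df=536870912 and Ng=80582514 and Dg=2147483648 and Nh=96761310 and Dh=68719476736]) simp_all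
  have h: "Hh 19 0 \<le> real 224403121196654400/real 614889782588491410 * Hh 19 1"
    by (rule expl[OF _ _ _ c]) (simp_all add: pr19)
  have h2: "Hh 19 0 \<le> dl * Hh 19 1" using h by (simp add: dl_def)
  show ?thesis using h2 le_dl[OF h2 Hh_pos[OF pr19]] by simp
qed

lemma t_19: "2 \<le> a \<Longrightarrow> Hh 19 a \<le> Hh 19 1 \<and> (\<not> good 19 a \<longrightarrow> Hh 19 a \<le> dl * Hh 19 1)"
proof -
  assume ta: "2 \<le> a"
  have c: "(real 361 / real 360)^144 \<le> real 95715528/real 67108864 * (real 70154446/real 67108864)"
    by (rule chain144[where A=361 and B=360 and Na=67295278 and Da=67108864 and Nb=67482210 and Db=67108864 and Nc=67857634 and Dc=67108864 and Nd=68614759 and Dd=67108864 and Ne=70154446 and De=67108864 and Nf=73338245 and Df=67108864 and Ng=80145869 and Dg=67108864 and Nh=95715528 and Dh=67108864]) simp_all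
  have h: "Hh 19 a \<le> real 224403121196654400/real 614889782588491410 * Hh 19 1"
    by (rule tail[OF _ _ _ c _ _ _ _ ta]) (simp_all add: pr19)
  have h2: "Hh 19 a \<le> dl * Hh 19 1" using h by (simp add: dl_def)
  show ?thesis using h2 le_dl[OF h2 Hh_pos[OF pr19]] by simp
qed

lemma P_19: "Hh 19 a \<le> Hh 19 1 \<and> (\<not> good 19 a \<longrightarrow> Hh 19 a \<le> dl * Hh 19 1)"
proof (cases "a < 2")
  case True
  then have "a = 0 \<or> a = 1" by presburger
  then show ?thesis using e_19_0 by (auto simp: good_def oo_def)
next
  case False
  then show ?thesis using t_19 by simp
qed

lemma e_23_0: "Hh 23 0 \<le> Hh 23 1 \<and> (\<not> good 23 0 \<longrightarrow> Hh 23 0 \<le> dl * Hh 23 1)"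
proof -
  have c: "(real 506 / real 528)^144 \<le> real 73985091/real 17179869184 * (real 67932160/real 134217728)"
    by (rule chain144[where A=506 and B=528 and Na=128625323 and Da=134217728 and Nb=123265935 and Db=134217728 and Nc=113207778 and Dc=134217728 and Nd=95486649 and Dd=134217728 and Ne=67932160 and De=134217728 and Nf=68765557 and Df=268435456 and Ng=70463149 and Dg=1073741824 and Nh=73985091 and Dh=17179869184]) simp_all
  have h: "Hh 23 0 \<le> real 224403121196654400/real 614889782588491410 * Hh 23 1"
    by (rule expl[OF _ _ _ c]) (simp_all add: pr23)
  have h2: "Hh 23 0 \<le> dl * Hh 23 1" using h by (simp add: dl_def)
  show ?thesis using h2 le_dl[OF h2 Hh_pos[OF pr23]] by simp
qed

lemma t_23: "2 \<le> a \<Longrightarrow> Hh 23 a \<le> Hh 23 1 \<and> (\<not> good 23 a \<longrightarrow> Hh 23 a \<le> dl * Hh 23 1)"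
proof -
  assume ta: "2 \<le> a"
  have c: "(real 529 / real 528)^144 \<le> real 85499749/real 67108864 * (real 69171629/real 67108864)"
    by (rule chain144[where A=529 and B=528 and Na=67235965 and Da=67108864 and Nb=67363307 and Db=67108864 and Nc=67618715 and Dc=67108864 and Nd=68132440 and Dd=67108864 and Ne=69171629 and De=67108864 and Nf=71297799 and Df=67108864 and Ng=75748208 and Dg=67108864 and Nh=85499749 and Dh=67108864]) simp_all
  have h: "Hh 23 a \<le> real 224403121196654400/real 614889782588491410 * Hh 23 1"
    by (rule tail[OF _ _ _ c _ _ _ _ ta]) (simp_all add: pr23)
  have h2: "Hh 23 a \<le> dl * Hh 23 1" using h by (simp add: dl_def)
  show ?thesis using h2 le_dl[OF h2 Hh_pos[OF pr23]] by simp
qed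

lemma P_23: "Hh 23 a \<le> Hh 23 1 \<and> (\<not> good 23 a \<longrightarrow> Hh 23 a \<le> dl * Hh 23 1)"
proof (cases "a < 2")
  case True
  then have "a = 0 \<or> a = 1" by presburger
  then show ?thesis using e_23_0 by (auto simp: good_def oo_def)
next
  case False
  then show ?thesis using t_23 by simp
qed

lemma e_29_0: "Hh 29 0 \<le> Hh 29 1 \<and> (\<not> good 29 0 \<longrightarrow> Hh 29 0 \<le> dl * Hh 29 1)"
proof -
  have c: "(real 812 / real 840)^144 \<le> real 112050350/real 8589934592 * (real 78025723/real 134217728)"
    by (rule chain144[where A=812 and B=840 and Na=129743804 and Da=134217728 and Nb=125419011 and Db=134217728 and Nc=117197099 and Dc=134217728 and Nd=102334917 and Dd=134217728 and Ne=78025723 and De=134217728 and Nf=90718470 and Df=268435456 and Ng=122634185 and Dg=1073741824 and Nh=112050350 and Dh=8589934592]) simp_all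
  have h: "Hh 29 0 \<le> real 224403121196654400/real 614889782588491410 * Hh 29 1"
    by (rule expl[OF _ _ _ c]) (simp_all add: pr29)
  have h2: "Hh 29 0 \<le> dl * Hh 29 1" using h by (simp add: dl_def)
  show ?thesis using h2 le_dl[OF h2 Hh_pos[OF pr29]] by simp
qed

lemma t_29: "2 \<le> a \<Longrightarrow> Hh 29 a \<le> Hh 29 1 \<and> (\<not> good 29 a \<longrightarrow> Hh 29 a \<le> dl * Hh 29 1)"
proof -
  assume ta: "2 \<le> a"
  have c: "(real 841 / real 840)^144 \<le> real 78148324/real 67108864 * (real 68398623/real 67108864)"
    by (rule chain144[where A=841 and B=840 and Na=67188756 and Da=67108864 and Nb=67268744 and Db=67108864 and Nc=67429005 and Dc=67108864 and Nd=67750674 and Dd=67108864 and Ne=68398623 and De=67108864 and Nf=69713170 and Df=67108864 and Ng=72418542 and Dg=67108864 and Nh=78148324 and Dh=67108864]) simp_all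
  have h: "Hh 29 a \<le> real 224403121196654400/real 614889782588491410 * Hh 29 1"
    by (rule tail[OF _ _ _ c _ _ _ _ ta]) (simp_all add: pr29)
  have h2: "Hh 29 a \<le> dl * Hh 29 1" using h by (simp add: dl_def)
  show ?thesis using h2 le_dl[OF h2 Hh_pos[OF pr29]] by simp
qed

lemma P_29: "Hh 29 a \<le> Hh 29 1 \<and> (\<not> good 29 a \<longrightarrow> Hh 29 a \<le> dl * Hh 29 1)"
proof (cases "a < 2")
  case True
  then have "a = 0 \<or> a = 1" by presburger
  then show ?thesis using e_29_0 by (auto simp: good_def oo_def)
next
  case False
  then show ?thesis using t_29 by simp
qed

lemma e_31_0: "Hh 31 0 \<le> Hh 31 1 \<and> (\<not> good 31 0 \<longrightarrow> Hh 31 0 \<le> dl * Hh 31 1)"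
proof -
  have c: "(real 930 / real 960)^144 \<le> real 73800535/real 4294967296 * (real 80760191/real 134217728)"
    by (rule chain144[where A=930 and B=960 and Na=130023424 and Da=134217728 and Nb=125960192 and Db=134217728 and Nc=118210688 and Dc=134217728 and Nd=104112676 and Dd=134217728 and Ne=80760191 and De=134217728 and Nf=97188480 and Df=268435456 and Ng=70375209 and Dg=536870912 and Nh=73800535 and Dh=4294967296]) simp_all
  have h: "Hh 31 0 \<le> real 224403121196654400/real 614889782588491410 * Hh 31 1"
    by (rule expl[OF _ _ _ c]) (simp_all add: pr31)
  have h2: "Hh 31 0 \<le> dl * Hh 31 1" using h by (simp add: dl_def)
  show ?thesis using h2 le_dl[OF h2 Hh_pos[OF pr31]] by simp
qed

lemma t_31: "2 \<le> a \<Longrightarrow> Hh 31 a \<le> Hh 31 1 \<and> (\<not> good 31 a \<longrightarrow> Hh 31 a \<le> dl * Hh 31 1)"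
proof -
  assume ta: "2 \<le> a"
  have c: "(real 961 / real 960)^144 \<le> real 76675510/real 67108864 * (real 68236145/real 67108864)"
    by (rule chain144[where A=961 and B=960 and Na=67178770 and Da=67108864 and Nb=67248749 and Db=67108864 and Nc=67388926 and Dc=67108864 and Nd=67670157 and Dd=67108864 and Ne=68236145 and De=67108864 and Nf=69382362 and Df=67108864 and Ng=71732882 and Dg=67108864 and Nh=76675510 and Dh=67108864]) simp_all
  have h: "Hh 31 a \<le> real 224403121196654400/real 614889782588491410 * Hh 31 1"
    by (rule tail[OF _ _ _ c _ _ _ _ ta]) (simp_all add: pr31)
  have h2: "Hh 31 a \<le> dl * Hh 31 1" using h by (simp add: dl_def)
  show ?thesis using h2 le_dl[OF h2 Hh_pos[OF pr31]] by simp
qed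

lemma P_31: "Hh 31 a \<le> Hh 31 1 \<and> (\<not> good 31 a \<longrightarrow> Hh 31 a \<le> dl * Hh 31 1)"
proof (cases "a < 2")
  case True
  then have "a = 0 \<or> a = 1" by presburger
  then show ?thesis using e_31_0 by (auto simp: good_def oo_def)
next
  case False
  then show ?thesis using t_31 by simp
qed

lemma e_37_0: "Hh 37 0 \<le> Hh 37 1 \<and> (\<not> good 37 0 \<longrightarrow> Hh 37 0 \<le> dl * Hh 37 1)"
proof -
  have c: "(real 1332 / real 1368)^144 \<le> real 70705083/real 2147483648 * (real 87599167/real 134217728)"
    by (rule chain144[where A=1332 and B=1368 and Na=130685683 and Da=134217728 and Nb=127246587 and Db=134217728 and Nc=120637521 and Dc=134217728 and Nd=108431366 and Dd=134217728 and Ne=87599167 and De=134217728 and Nf=114345761 and Df=268435456 and Ng=97415992 and Dg=536870912 and Nh=70705083 and Dh=2147483648]) simp_all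
  have h: "Hh 37 0 \<le> real 1/real 1 * Hh 37 1"
    by (rule expl[OF _ _ _ c]) (simp_all add: pr37)
  show ?thesis using h by (simp add: good_def oo_def)
qed

lemma t_37: "2 \<le> a \<Longrightarrow> Hh 37 a \<le> Hh 37 1 \<and> (\<not> good 37 a \<longrightarrow> Hh 37 a \<le> dl * Hh 37 1)"
proof -
  assume ta: "2 \<le> a"
  have c: "(real 1369 / real 1368)^144 \<le> real 73688841/real 67108864 * (real 67898099/real 67108864)"
    by (rule chain144[where A=1369 and B=1368 and Na=67157921 and Da=67108864 and Nb=67207014 and Db=67108864 and Nc=67305308 and Dc=67108864 and Nd=67502328 and Dd=67108864 and Ne=67898099 and De=67108864 and Nf=68696616 and Df=67108864 and Ng=70321934 and Dg=67108864 and Nh=73688841 and Dh=67108864]) simp_all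
  have h: "Hh 37 a \<le> real 224403121196654400/real 614889782588491410 * Hh 37 1"
    by (rule tail[OF _ _ _ c _ _ _ _ ta]) (simp_all add: pr37)
  have h2: "Hh 37 a \<le> dl * Hh 37 1" using h by (simp add: dl_def)
  show ?thesis using h2 le_dl[OF h2 Hh_pos[OF pr37]] by simp
qed

lemma P_37: "Hh 37 a \<le> Hh 37 1 \<and> (\<not> good 37 a \<longrightarrow> Hh 37 a \<le> dl * Hh 37 1)"
proof (cases "a < 2")
  case True
  then have "a = 0 \<or> a = 1" by presburger
  then show ?thesis using e_37_0 by (auto simp: good_def oo_def)
next
  case False
  then show ?thesis using t_37 by simp
qed

lemma e_41_1: "Hh 41 1 \<le> Hh 41 0 \<and> (\<not> good 41 1 \<longrightarrow> Hh 41 1 \<le> dl * Hh 41 0)"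
proof -
  have c: "(real 1680 / real 1640)^144 \<le> real 91671916/real 4194304 * (real 98679499/real 67108864)"
    by (rule chain144[where A=1680 and B=1640 and Na=68745666 and Da=67108864 and Nb=70422391 and Db=67108864 and Nc=73899525 and Dc=67108864 and Nd=81377325 and Dd=67108864 and Ne=98679499 and De=67108864 and Nf=72551098 and Df=33554432 and Ng=78434674 and Dg=16777216 and Nh=91671916 and Dh=4194304]) simp_all
  have h: "Hh 41 1 \<le> real 1/real 1 * Hh 41 0"
    by (rule expl[OF _ _ _ c]) (simp_all add: pr41)
  show ?thesis using h by (simp add: good_def oo_def)
qed

lemma t_41: "2 \<le> a \<Longrightarrow> Hh 41 a \<le> Hh 41 0 \<and> (\<not> good 41 a \<longrightarrow> Hh 41 a \<le> dl * Hh 41 0)"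
proof -
  assume ta: "2 \<le> a"
  have c: "(real 41 / real 40)^144 \<le> real 98927134/real 4194304 * (real 99623507/real 67108864)"
    by (rule chain144[where A=41 and B=40 and Na=68786586 and Da=67108864 and Nb=70506252 and Db=67108864 and Nc=74075633 and Dc=67108864 and Nd=81765643 and Dd=67108864 and Ne=99623507 and De=67108864 and Nf=73945844 and Df=33554432 and Ng=81479369 and Dg=16777216 and Nh=98927134 and Dh=4194304]) simp_all
  have h: "Hh 41 a \<le> real 224403121196654400/real 614889782588491410 * Hh 41 0"
    by (rule tail[OF _ _ _ c _ _ _ _ ta]) (simp_all add: pr41)
  have h2: "Hh 41 a \<le> dl * Hh 41 0" using h by (simp add: dl_def)
  show ?thesis using h2 le_dl[OF h2 Hh_pos[OF pr41]] by simp
qed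

lemma P_41: "Hh 41 a \<le> Hh 41 0 \<and> (\<not> good 41 a \<longrightarrow> Hh 41 a \<le> dl * Hh 41 0)"
proof (cases "a < 2")
  case True
  then have "a = 0 \<or> a = 1" by presburger
  then show ?thesis using e_41_1 by (auto simp: good_def oo_def)
next
  case False
  then show ?thesis using t_41 by simp
qed

lemma e_43_1: "Hh 43 1 \<le> Hh 43 0 \<and> (\<not> good 43 1 \<longrightarrow> Hh 43 1 \<le> dl * Hh 43 0)"
proof -
  have c: "(real 1848 / real 1806)^144 \<le> real 79550155/real 4194304 * (real 96945471/real 67108864)"
    by (rule chain144[where A=1848 and B=1806 and Na=68669536 and Da=67108864 and Nb=70266503 and Db=67108864 and Nc=73572717 and Dc=67108864 and Nd=80659162 and Dd=67108864 and Ne=96945471 and De=67108864 and Nf=70023719 and Df=33554432 and Ng=73065180 and Dg=16777216 and Nh=79550155 and Dh=4194304]) simp_all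
  have h: "Hh 43 1 \<le> real 1/real 1 * Hh 43 0"
    by (rule expl[OF _ _ _ c]) (simp_all add: pr43)
  show ?thesis using h by (simp add: good_def oo_def)
qed

lemma t_43: "2 \<le> a \<Longrightarrow> Hh 43 a \<le> Hh 43 0 \<and> (\<not> good 43 a \<longrightarrow> Hh 43 a \<le> dl * Hh 43 0)"
proof -
  assume ta: "2 \<le> a"
  have c: "(real 43 / real 42)^144 \<le> real 85253887/real 4194304 * (real 97788249/real 67108864)"
    by (rule chain144[where A=43 and B=42 and Na=68706695 and Da=67108864 and Nb=70342570 and Db=67108864 and Nc=73732096 and Dc=67108864 and Nd=81009001 and Dd=67108864 and Ne=97788249 and De=67108864 and Nf=71246488 and Df=33554432 and Ng=75639219 and Dg=16777216 and Nh=85253887 and Dh=4194304]) simp_all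
  have h: "Hh 43 a \<le> real 224403121196654400/real 614889782588491410 * Hh 43 0"
    by (rule tail[OF _ _ _ c _ _ _ _ ta]) (simp_all add: pr43)
  have h2: "Hh 43 a \<le> dl * Hh 43 0" using h by (simp add: dl_def)
  show ?thesis using h2 le_dl[OF h2 Hh_pos[OF pr43]] by simp
qed

lemma P_43: "Hh 43 a \<le> Hh 43 0 \<and> (\<not> good 43 a \<longrightarrow> Hh 43 a \<le> dl * Hh 43 0)"
proof (cases "a < 2")
  case True
  then have "a = 0 \<or> a = 1" by presburger
  then show ?thesis using e_43_1 by (auto simp: good_def oo_def)
next
  case False
  then show ?thesis using t_43 by simp
qed

lemma e_47_1: "Hh 47 1 \<le> Hh 47 0 \<and> (\<not> good 47 1 \<longrightarrow> Hh 47 1 \<le> dl * Hh 47 0)"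
proof -
  have c: "(real 2208 / real 2162)^144 \<le> real 124177635/real 8388608 * (real 93988360/real 67108864)"
    by (rule chain144[where A=2208 and B=2162 and Na=68536713 and Da=67108864 and Nb=69994942 and Db=67108864 and Nc=73005139 and Dc=67108864 and Nd=79419469 and Dd=67108864 and Ne=93988360 and De=67108864 and Nf=131634054 and Df=67108864 and Ng=129100116 and Dg=33554432 and Nh=124177635 and Dh=8388608]) simp_all
  have h: "Hh 47 1 \<le> real 1/real 1 * Hh 47 0"
    by (rule expl[OF _ _ _ c]) (simp_all add: pr47)
  show ?thesis using h by (simp add: good_def oo_def)
qed

lemma t_47: "2 \<le> a \<Longrightarrow> Hh 47 a \<le> Hh 47 0 \<and> (\<not> good 47 a \<longrightarrow> Hh 47 a \<le> dl * Hh 47 0)"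
proof -
  assume ta: "2 \<le> a"
  have c: "(real 47 / real 46)^144 \<le> real 131587279/real 8388608 * (real 94671746/real 67108864)"
    by (rule chain144[where A=47 and B=46 and Na=68567753 and Da=67108864 and Nb=70058357 and Db=67108864 and Nc=73137483 and Dc=67108864 and Nd=79707674 and Dd=67108864 and Ne=94671746 and De=67108864 and Nf=133555226 and Df=67108864 and Ng=132895995 and Dg=33554432 and Nh=131587279 and Dh=8388608]) simp_all
  have h: "Hh 47 a \<le> real 224403121196654400/real 614889782588491410 * Hh 47 0"
    by (rule tail[OF _ _ _ c _ _ _ _ ta]) (simp_all add: pr47)
  have h2: "Hh 47 a \<le> dl * Hh 47 0" using h by (simp add: dl_def)
  show ?thesis using h2 le_dl[OF h2 Hh_pos[OF pr47]] by simp
qed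

lemma P_47: "Hh 47 a \<le> Hh 47 0 \<and> (\<not> good 47 a \<longrightarrow> Hh 47 a \<le> dl * Hh 47 0)"
proof (cases "a < 2")
  case True
  then have "a = 0 \<or> a = 1" by presburger
  then show ?thesis using e_47_1 by (auto simp: good_def oo_def)
next
  case False
  then show ?thesis using t_47 by simp
qed

lemma big53: "(real 53 / real 52)^144 \<le> real 96067020/real 8388608 * (real 91020756/real 67108864)"
  by (rule chain144[where A=53 and B=52 and Na=68399420 and Da=67108864 and Nb=69714795 and Db=67108864 and Nc=72421918 and Dc=67108864 and Nd=78155611 and Dd=67108864 and Ne=91020756 and De=67108864 and Nf=123452813 and Df=67108864 and Ng=113551297 and Dg=33554432 and Nh=96067020 and Dh=8388608]) simp_all
lemma big53b: "real 96067020/real 8388608 * (real 91020756/real 67108864) / 53 \<le> dl"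
  unfolding dl_def by (simp add: divide_simps)
lemma big53c: "(real 53 / real 52)^144 / 53 \<le> dl"
proof -
  have "(real 53 / real 52)^144 / 53 \<le> real 96067020/real 8388608 * (real 91020756/real 67108864) / 53" using big53 by (intro divide_right_mono) auto
  then show ?thesis using big53b by linarith
qed



definition TT :: "nat set" where "TT = {2,3,5,7,11,13,17,19,23,29,31,37,41,43,47}"
definition SR :: "nat set" where "SR = {2,3,5,7,11,13,17,19,23,29,31,37}"

lemma small_primes_aux: "\<forall>p \<in> {..<53::nat}. prime p \<longrightarrow> p \<in> {2,3,5,7,11,13,17,19,23,29,31,37,41,43,47}"
  by code_simp

lemma small_primes: "prime (p::nat) \<Longrightarrow> p < 53 \<Longrightarrow> p \<in> TT"
  using small_primes_aux unfolding TT_def by auto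

lemma TT_primes: "p \<in> TT \<Longrightarrow> prime p"
  unfolding TT_def using pr2 pr3 pr5 pr7 pr11 pr13 pr17 pr19 pr23 pr29 pr31 pr37 pr41 pr43 pr47 by auto

lemma SR_TT: "SR \<subseteq> TT" unfolding SR_def TT_def by auto

lemma SR_primes: "p \<in> SR \<Longrightarrow> prime p"
  using TT_primes SR_TT by auto

lemma oo_out: "p \<notin> SR \<Longrightarrow> oo p = 0"
  unfolding oo_def SR_def by auto

lemma good_out: "p \<notin> SR \<Longrightarrow> good p 0"
  using oo_out[of p] unfolding good_def SR_def by auto

lemma bigp:
  assumes "prime p" "53 \<le> p" "1 \<le> a"
  shows "Hh p a \<le> dl"
proof -
  have p53: "real p \<ge> 53" using assms(2) by simp
  have "Fp p a \<le> real p / (real p - 1)" by (rule Fp_le[OF assms(1)])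
  also have "\<dots> \<le> 53 / 52" using p53 by (simp add: divide_simps)
  finally have f: "Fp p a \<le> 53 / 52" .
  have f0: "0 \<le> Fp p a" using Fp_pos[OF assms(1), of a] by simp
  have g: "Fp p a ^ 144 \<le> (real 53 / real 52)^144" using power_mono[OF f f0] by simp
  have pa: "real p ^ a \<ge> 53"
  proof -
    have h1: "real p ^ 1 \<le> real p ^ a" using assms(3) p53 by (intro power_increasing) auto
    then show ?thesis using p53 unfolding power_one_right by linarith
  qed
  have "Hh p a = Fp p a ^ 144 / real p ^ a" unfolding Hh_def ..
  also have "\<dots> \<le> (real 53 / real 52)^144 / 53"
    using g pa f0 by (intro frac_le) auto
  also have "\<dots> \<le> dl" using big53c .
  finally show ?thesis .
qed

lemma allp:
  assumes "prime p"
  shows "Hh p a \<le> Hh p (oo p) \<and> (\<not> good p a \<longrightarrow> Hh p a \<le> dl * Hh p (oo p))"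
proof (cases "p \<in> TT")
  case True
  then have "p = 2 \<or> p = 3 \<or> p = 5 \<or> p = 7 \<or> p = 11 \<or> p = 13 \<or> p = 17 \<or> p = 19 \<or> p = 23 \<or> p = 29 \<or> p = 31 \<or> p = 37 \<or> p = 41 \<or> p = 43 \<or> p = 47"
    unfolding TT_def by auto
  then show ?thesis
    using P_2 P_3 P_5 P_7 P_11 P_13 P_17 P_19 P_23 P_29 P_31 P_37 P_41 P_43 P_47
    by (elim disjE) (simp_all add: oo_def)
next
  case False
  then have p53: "53 \<le> p" using small_primes[OF assms] by force
  have nSR: "p \<notin> SR" using False SR_TT by auto
  have o0: "oo p = 0" by (rule oo_out[OF nSR])
  have gd: "good p a \<longleftrightarrow> a = 0"
    using False o0 unfolding good_def TT_def by auto
  show ?thesis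
  proof (cases "a = 0")
    case True then show ?thesis using o0 gd by simp
  next
    case False
    then have h: "Hh p a \<le> dl" using bigp[OF assms p53] by simp
    then show ?thesis using o0 Hh_0[OF assms] dl_le1 gd by simp
  qed
qed

lemma absum:
  assumes "finite S" "\<forall>p\<in>S. prime (p::nat)"
  shows "real (sigma (\<Prod>p\<in>S. p ^ e p)) / real (\<Prod>p\<in>S. p ^ e p) = (\<Prod>p\<in>S. Fp p (e p))"
  unfolding sigma_prod[OF assms] of_nat_prod Fp_def prod_dividef ..

lemma hsum:
  assumes "finite S" "\<forall>p\<in>S. prime (p::nat)"
  shows "(real (sigma (\<Prod>p\<in>S. p ^ e p)) / real (\<Prod>p\<in>S. p ^ e p))^144 / real (\<Prod>p\<in>S. p ^ e p)
     = (\<Prod>p\<in>S. Hh p (e p))"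
  using absum[OF assms, of e] by (simp add: Hh_def prod_dividef prod_power_distrib)

lemma R_repr: "(224403121196654400::nat) = (\<Prod>p\<in>SR. p ^ oo p)"
  by (simp add: SR_def oo_def)

lemma key:
  fixes n :: nat
  assumes n0: "0 < n" and nX: "n < 614889782588491410"
    and ab: "real (sigma n) / real n > real (sigma 224403121196654400) / real 224403121196654400"
    and pq: "prime q"
  shows "good q (multiplicity q n)"
proof (rule ccontr)
  assume bad: "\<not> good q (multiplicity q n)"
  define e where "e p = multiplicity p n" for p
  define S where "S = prime_factors n"
  define U where "U = S \<union> SR"
  define An where "An = real (sigma n) / real n"
  define AR where "AR = real (sigma 224403121196654400) / real (224403121196654400::nat)"
  have fS: "finite S" unfolding S_def by simp
  have fSR: "finite SR" unfolding SR_def by simp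
  have fU: "finite U" unfolding U_def using fS fSR by simp
  have pS: "\<forall>p\<in>S. prime p" unfolding S_def by auto
  have pSR: "\<forall>p\<in>SR. prime p" using SR_primes by auto
  have pU: "\<forall>p\<in>U. prime p" unfolding U_def using pS pSR by auto
  have nrep: "n = (\<Prod>p\<in>S. p ^ e p)" unfolding S_def e_def using prime_factorization_nat[OF n0] .
  have Hn: "An^144 / real n = (\<Prod>p\<in>S. Hh p (e p))"
    unfolding An_def using hsum[OF fS pS, of e] nrep[symmetric] by simp
  have HR: "AR^144 / real (224403121196654400::nat) = (\<Prod>p\<in>SR. Hh p (oo p))"
    unfolding AR_def using hsum[OF fSR pSR, of oo] R_repr[symmetric] by simp
  have HnU: "(\<Prod>p\<in>S. Hh p (e p)) = (\<Prod>p\<in>U. Hh p (e p))"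
  proof (rule prod.mono_neutral_left[OF fU])
    show "S \<subseteq> U" unfolding U_def by auto
    show "\<forall>i\<in>U - S. Hh i (e i) = 1"
    proof
      fix i assume i: "i \<in> U - S"
      then have "prime i" using pU by auto
      moreover have "e i = 0" using i \<open>prime i\<close> unfolding e_def S_def
        by (simp add: prime_factors_multiplicity)
      ultimately show "Hh i (e i) = 1" by (simp add: Hh_0)
    qed
  qed
  have HRU: "(\<Prod>p\<in>SR. Hh p (oo p)) = (\<Prod>p\<in>U. Hh p (oo p))"
  proof (rule prod.mono_neutral_left[OF fU])
    show "SR \<subseteq> U" unfolding U_def by auto
    show "\<forall>i\<in>U - SR. Hh i (oo i) = 1"
    proof
      fix i assume i: "i \<in> U - SR"
      then have "prime i" using pU by auto
      moreover have "oo i = 0" using i oo_out by auto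
      ultimately show "Hh i (oo i) = 1" by (simp add: Hh_0)
    qed
  qed
  have qU: "q \<in> U"
  proof (rule ccontr)
    assume "q \<notin> U"
    then have "q \<notin> S" "q \<notin> SR" unfolding U_def by auto
    then have "e q = 0" "good q 0" using pq good_out unfolding e_def S_def
      by (auto simp: prime_factors_multiplicity)
    then show False using bad unfolding e_def by simp
  qed
  have aq: "Hh q (e q) \<le> dl * Hh q (oo q)" using allp[OF pq] bad unfolding e_def by simp
  have rest: "(\<Prod>p\<in>U - {q}. Hh p (e p)) \<le> (\<Prod>p\<in>U - {q}. Hh p (oo p))"
    by (rule prod_mono) (use pU allp Hh_pos in \<open>auto simp: less_imp_le\<close>)
  have restpos: "0 \<le> (\<Prod>p\<in>U - {q}. Hh p (e p))"
    by (rule prod_nonneg) (use pU Hh_pos in \<open>auto simp: less_imp_le\<close>)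
  have "(\<Prod>p\<in>U. Hh p (e p)) = Hh q (e q) * (\<Prod>p\<in>U - {q}. Hh p (e p))"
    using prod.remove[OF fU qU] by simp
  also have "\<dots> \<le> (dl * Hh q (oo q)) * (\<Prod>p\<in>U - {q}. Hh p (oo p))"
  proof (rule mult_mono[OF aq rest])
    show "0 \<le> dl * Hh q (oo q)" using Hh_pos[OF pq, of "oo q"] dl_pos by simp
  qed (rule restpos)
  also have "\<dots> = dl * (\<Prod>p\<in>U. Hh p (oo p))"
    using prod.remove[OF fU qU, of "\<lambda>p. Hh p (oo p)"] by simp
  finally have main: "An^144 / real n \<le> dl * (AR^144 / real (224403121196654400::nat))"
    using Hn HR HnU HRU by simp
  have ARpos: "AR > 0"
  proof -
    have "AR = (\<Prod>p\<in>SR. Fp p (oo p))"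
      unfolding AR_def using absum[OF fSR pSR, of oo] R_repr[symmetric] by simp
    also have "\<dots> > 0" using pSR Fp_pos by (intro prod_pos) auto
    finally show ?thesis .
  qed
  have "An > AR" using ab unfolding An_def AR_def by simp
  then have gt: "AR^144 < An^144" using ARpos by (intro power_strict_mono) auto
  have "An^144 \<le> real n * (dl * (AR^144 / real (224403121196654400::nat)))"
    using main n0 by (simp add: divide_le_eq mult.commute)
  also have "\<dots> = (real n / 614889782588491410) * AR^144"
    unfolding dl_def by simp
  also have "\<dots> < AR^144"
  proof -
    have "real n / 614889782588491410 < 1" using nX by simp
    moreover have "AR^144 > 0" using ARpos by simp
    ultimately show ?thesis by simp
  qed
  finally show False using gt by simp
qed




lemma sigma_pp_div: "prime p \<Longrightarrow> sigma (p ^ a) = (p ^ Suc a - 1) div (p - 1)"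
proof -
  assume pp: "prime p"
  have "p - 1 > 0" using prime_gt_1_nat[OF pp] by simp
  then show ?thesis using sigma_prime_power_closed[OF pp, of a, symmetric] by simp
qed

lemma sig_formula:
  assumes "finite S" "\<forall>p\<in>S. prime (p::nat)"
  shows "sigma (\<Prod>p\<in>S. p ^ e p) = (\<Prod>p\<in>S. (p ^ Suc (e p) - 1) div (p - 1))"
  unfolding sigma_prod[OF assms] using assms(2) by (intro prod.cong) (auto simp: sigma_pp_div)

lemma cmp_iff: "(b::nat) > 0 \<Longrightarrow> d > 0 \<Longrightarrow> (real a / real b < real c / real d) \<longleftrightarrow> a * d < c * b"
proof -
  assume b: "b > 0" and d: "d > 0"
  have "(real a / real b < real c / real d) \<longleftrightarrow> real a * real d < real c * real b"
    using b d by (simp add: divide_simps)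
  also have "\<dots> \<longleftrightarrow> a * d < c * b" by (metis of_nat_less_iff of_nat_mult)
  finally show ?thesis .
qed

lemma sigR: "sigma 224403121196654400 = 1437816604247654400"
proof -
  have "sigma 224403121196654400 = (\<Prod>p\<in>SR. (p ^ Suc (oo p) - 1) div (p - 1))"
    by (subst R_repr) (rule sig_formula, simp add: SR_def, use SR_primes in blast)
  also have "\<dots> = 1437816604247654400" by (simp add: SR_def oo_def)
  finally show ?thesis .
qed

lemma enum0:
  "\<forall>a\<in>{5,6,7,8::nat}. \<forall>b\<in>{3,4,5::nat}. \<forall>c\<in>{2,3::nat}. \<forall>d\<in>{1,2::nat}. \<forall>w\<in>{0,1::nat}. \<forall>x\<in>{0,1::nat}. \<forall>y\<in>{0,1::nat}. \<forall>z\<in>{0,1::nat}.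
   (if 448806242393308800 < (2::nat)^a*3^b*5^c*7^d*955049953*37^w*41^x*43^y*47^z \<and> (2::nat)^a*3^b*5^c*7^d*955049953*37^w*41^x*43^y*47^z < 614889782588491410
    then (a,b,c,d,w,x,y,z) \<in> {(5,4,3,2,1,0,0,0), (6,3,2,1,0,0,1,1), (6,3,2,1,0,1,0,1), (6,3,2,1,0,1,1,0), (6,3,2,1,1,0,0,1), (6,3,2,1,1,0,1,0), (6,3,3,2,0,0,0,1), (6,5,3,1,0,0,0,1), (6,5,3,1,0,0,1,0), (6,5,3,1,0,1,0,0), (6,5,3,1,1,0,0,0), (7,4,2,2,0,0,0,1), (7,4,2,2,0,0,1,0), (7,4,2,2,0,1,0,0), (8,5,2,1,0,0,0,1)} else True)"
  by simp

lemma fTT: "finite TT" unfolding TT_def by simp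

lemma forward:
  fixes n :: nat
  assumes nL: "448806242393308800 < n" and nX: "n < 614889782588491410"
    and ab: "real (sigma n) / real n > real (sigma 224403121196654400) / real 224403121196654400"
  shows "n = 497325836165558400 \<or> n = 521585633051683200"
proof -
  have n0: "0 < n" using nL by simp
  define e where "e p = multiplicity p n" for p
  have G: "prime p \<Longrightarrow> good p (e p)" for p unfolding e_def using key[OF n0 nX ab] .
  have sub: "prime_factors n \<subseteq> TT"
  proof
    fix p assume p: "p \<in> prime_factors n"
    then have pp: "prime p" and ep: "e p > 0" unfolding e_def by (auto simp: prime_factors_multiplicity)
    show "p \<in> TT"
    proof (rule ccontr)
      assume nt: "p \<notin> TT"
      then have "p \<notin> SR" using SR_TT by auto
      then have "oo p = 0" by (rule oo_out)
      then show False using G[OF pp] ep nt unfolding good_def TT_def by auto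
    qed
  qed
  have nrep: "n = (\<Prod>p\<in>TT. p ^ e p)"
  proof -
    have "n = (\<Prod>p\<in>prime_factors n. p ^ e p)" unfolding e_def using prime_factorization_nat[OF n0] .
    also have "\<dots> = (\<Prod>p\<in>TT. p ^ e p)"
    proof (rule prod.mono_neutral_left[OF fTT sub], rule ballI)
      fix i assume i: "i \<in> TT - prime_factors n"
      then have "prime i" using TT_primes by auto
      then have "e i = 0" using i unfolding e_def by (auto simp: prime_factors_multiplicity)
      then show "i ^ e i = 1" by simp
    qed
    finally show ?thesis .
  qed
  have sig: "sigma n = (\<Prod>p\<in>TT. (p ^ Suc (e p) - 1) div (p - 1))"
    by (subst nrep) (rule sig_formula[OF fTT], use TT_primes in blast)
  have g2: "e 2 \<in> {5,6,7,8}" using G[OF pr2] unfolding good_def by auto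
  have g3: "e 3 \<in> {3,4,5}" using G[OF pr3] unfolding good_def by auto
  have g5: "e 5 \<in> {2,3}" using G[OF pr5] unfolding good_def by auto
  have g7: "e 7 \<in> {1,2}" using G[OF pr7] unfolding good_def by auto
  have g37: "e 37 \<in> {0,1}" using G[OF pr37] unfolding good_def by auto
  have g41: "e 41 \<in> {0,1}" using G[OF pr41] unfolding good_def by auto
  have g43: "e 43 \<in> {0,1}" using G[OF pr43] unfolding good_def by auto
  have g47: "e 47 \<in> {0,1}" using G[OF pr47] unfolding good_def by auto
  have o1: "e 11 = 1" "e 13 = 1" "e 17 = 1" "e 19 = 1" "e 23 = 1" "e 29 = 1" "e 31 = 1"
    using G[OF pr11] G[OF pr13] G[OF pr17] G[OF pr19] G[OF pr23] G[OF pr29] G[OF pr31]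
    unfolding good_def oo_def by simp_all
  have nexp: "n = 2^e 2*3^e 3*5^e 5*7^e 7*955049953*37^e 37*41^e 41*43^e 43*47^e 47"
    using nrep o1 by (simp add: TT_def mult_ac)
  have E: "(if 448806242393308800 < (2::nat)^e 2*3^e 3*5^e 5*7^e 7*955049953*37^e 37*41^e 41*43^e 43*47^e 47 \<and> (2::nat)^e 2*3^e 3*5^e 5*7^e 7*955049953*37^e 37*41^e 41*43^e 43*47^e 47 < 614889782588491410
    then (e 2,e 3,e 5,e 7,e 37,e 41,e 43,e 47) \<in> {(5,4,3,2,1,0,0,0), (6,3,2,1,0,0,1,1), (6,3,2,1,0,1,0,1), (6,3,2,1,0,1,1,0), (6,3,2,1,1,0,0,1), (6,3,2,1,1,0,1,0), (6,3,3,2,0,0,0,1), (6,5,3,1,0,0,0,1), (6,5,3,1,0,0,1,0), (6,5,3,1,0,1,0,0), (6,5,3,1,1,0,0,0), (7,4,2,2,0,0,0,1), (7,4,2,2,0,0,1,0), (7,4,2,2,0,1,0,0), (8,5,2,1,0,0,0,1)} else True)"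
    using enum0 g2 g3 g5 g7 g37 g41 g43 g47 by blast
  have tup: "(e 2,e 3,e 5,e 7,e 37,e 41,e 43,e 47) \<in> {(5,4,3,2,1,0,0,0), (6,3,2,1,0,0,1,1), (6,3,2,1,0,1,0,1), (6,3,2,1,0,1,1,0), (6,3,2,1,1,0,0,1), (6,3,2,1,1,0,1,0), (6,3,3,2,0,0,0,1), (6,5,3,1,0,0,0,1), (6,5,3,1,0,0,1,0), (6,5,3,1,0,1,0,0), (6,5,3,1,1,0,0,0), (7,4,2,2,0,0,0,1), (7,4,2,2,0,0,1,0), (7,4,2,2,0,1,0,0), (8,5,2,1,0,0,0,1)}"
    using E nL nX nexp by simp
  have ineq: "1437816604247654400 * n < sigma n * 224403121196654400"
  proof -
    have c0: "(224403121196654400::nat) > 0" by simp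
    have "sigma 224403121196654400 * n < sigma n * 224403121196654400"
      using cmp_iff[OF c0 n0, of "sigma 224403121196654400" "sigma n"] ab by blast
    then show ?thesis unfolding sigR .
  qed
  have ineq2: "1437816604247654400 * (2^e 2*3^e 3*5^e 5*7^e 7*955049953*37^e 37*41^e 41*43^e 43*47^e 47)
     < (\<Prod>p\<in>TT. (p ^ Suc (e p) - 1) div (p - 1)) * 224403121196654400"
    using ineq nexp sig by simp
  have sigexp: "(\<Prod>p\<in>TT. (p ^ Suc (e p) - 1) div (p - 1)) =
     ((2 ^ Suc (e 2) - 1) div 1) * ((3 ^ Suc (e 3) - 1) div 2) * ((5 ^ Suc (e 5) - 1) div 4) * ((7 ^ Suc (e 7) - 1) div 6)
     * 12 * 14 * 18 * 20 * 24 * 30 * 32 *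
     ((37 ^ Suc (e 37) - 1) div 36) * ((41 ^ Suc (e 41) - 1) div 40) * ((43 ^ Suc (e 43) - 1) div 42) * ((47 ^ Suc (e 47) - 1) div 46)"
    using o1 by (simp add: TT_def mult_ac)
  from tup have "(e 2 = 5 \<and> e 3 = 4 \<and> e 5 = 3 \<and> e 7 = 2 \<and> e 37 = 1 \<and> e 41 = 0 \<and> e 43 = 0 \<and> e 47 = 0) \<or>
    (e 2 = 6 \<and> e 3 = 3 \<and> e 5 = 2 \<and> e 7 = 1 \<and> e 37 = 0 \<and> e 41 = 0 \<and> e 43 = 1 \<and> e 47 = 1) \<or>
    (e 2 = 6 \<and> e 3 = 3 \<and> e 5 = 2 \<and> e 7 = 1 \<and> e 37 = 0 \<and> e 41 = 1 \<and> e 43 = 0 \<and> e 47 = 1) \<or>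
    (e 2 = 6 \<and> e 3 = 3 \<and> e 5 = 2 \<and> e 7 = 1 \<and> e 37 = 0 \<and> e 41 = 1 \<and> e 43 = 1 \<and> e 47 = 0) \<or>
    (e 2 = 6 \<and> e 3 = 3 \<and> e 5 = 2 \<and> e 7 = 1 \<and> e 37 = 1 \<and> e 41 = 0 \<and> e 43 = 0 \<and> e 47 = 1) \<or>
    (e 2 = 6 \<and> e 3 = 3 \<and> e 5 = 2 \<and> e 7 = 1 \<and> e 37 = 1 \<and> e 41 = 0 \<and> e 43 = 1 \<and> e 47 = 0) \<or>
    (e 2 = 6 \<and> e 3 = 3 \<and> e 5 = 3 \<and> e 7 = 2 \<and> e 37 = 0 \<and> e 41 = 0 \<and> e 43 = 0 \<and> e 47 = 1) \<or>
    (e 2 = 6 \<and> e 3 = 5 \<and> e 5 = 3 \<and> e 7 = 1 \<and> e 37 = 0 \<and> e 41 = 0 \<and> e 43 = 0 \<and> e 47 = 1) \<or>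
    (e 2 = 6 \<and> e 3 = 5 \<and> e 5 = 3 \<and> e 7 = 1 \<and> e 37 = 0 \<and> e 41 = 0 \<and> e 43 = 1 \<and> e 47 = 0) \<or>
    (e 2 = 6 \<and> e 3 = 5 \<and> e 5 = 3 \<and> e 7 = 1 \<and> e 37 = 0 \<and> e 41 = 1 \<and> e 43 = 0 \<and> e 47 = 0) \<or>
    (e 2 = 6 \<and> e 3 = 5 \<and> e 5 = 3 \<and> e 7 = 1 \<and> e 37 = 1 \<and> e 41 = 0 \<and> e 43 = 0 \<and> e 47 = 0) \<or>
    (e 2 = 7 \<and> e 3 = 4 \<and> e 5 = 2 \<and> e 7 = 2 \<and> e 37 = 0 \<and> e 41 = 0 \<and> e 43 = 0 \<and> e 47 = 1) \<or>
    (e 2 = 7 \<and> e 3 = 4 \<and> e 5 = 2 \<and> e 7 = 2 \<and> e 37 = 0 \<and> e 41 = 0 \<and> e 43 = 1 \<and> e 47 = 0) \<or>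
    (e 2 = 7 \<and> e 3 = 4 \<and> e 5 = 2 \<and> e 7 = 2 \<and> e 37 = 0 \<and> e 41 = 1 \<and> e 43 = 0 \<and> e 47 = 0) \<or>
    (e 2 = 8 \<and> e 3 = 5 \<and> e 5 = 2 \<and> e 7 = 1 \<and> e 37 = 0 \<and> e 41 = 0 \<and> e 43 = 0 \<and> e 47 = 1)"
    by simp
  then show ?thesis using ineq2 nexp unfolding sigexp
    by (elim disjE conjE; simp)
qed




lemma in_sol:
  fixes f :: "nat \<Rightarrow> nat" and m :: nat
  assumes "m = (\<Prod>p\<in>TT. p ^ f p)"
    and "1437816604247654400 * m < (\<Prod>p\<in>TT. (p ^ Suc (f p) - 1) div (p - 1)) * 224403121196654400"
  shows "real (sigma m) / real m > real (sigma 224403121196654400) / real (224403121196654400::nat)"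
proof -
  have m0: "m > 0" unfolding assms(1) using TT_primes prime_gt_0_nat by (intro prod_pos) auto
  have c0: "(224403121196654400::nat) > 0" by simp
  have s: "sigma m = (\<Prod>p\<in>TT. (p ^ Suc (f p) - 1) div (p - 1))"
    unfolding assms(1) by (rule sig_formula[OF fTT]) (use TT_primes in blast)
  have "sigma 224403121196654400 * m < sigma m * 224403121196654400"
    unfolding s sigR using assms(2) .
  then show ?thesis using cmp_iff[OF c0 m0, of "sigma 224403121196654400" "sigma m"] by blast
qed

lemma sol1: "real (sigma 497325836165558400) / real (497325836165558400::nat) >
   real (sigma 224403121196654400) / real (224403121196654400::nat)"
proof (rule in_sol[where f = "\<lambda>p. if p = 2 then 7 else if p = 3 then 4 else if p = 5 \<or> p = 7 then 2
    else if p \<in> {11,13,17,19,23,29,31,41} then 1 else 0"])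
qed (simp_all add: TT_def)

lemma sol2: "real (sigma 521585633051683200) / real (521585633051683200::nat) >
   real (sigma 224403121196654400) / real (224403121196654400::nat)"
proof (rule in_sol[where f = "\<lambda>p. if p = 2 then 7 else if p = 3 then 4 else if p = 5 \<or> p = 7 then 2
    else if p \<in> {11,13,17,19,23,29,31,43} then 1 else 0"])
qed (simp_all add: TT_def)

theorem proposition6p1:
  shows "{n::nat. 448806242393308800 < n \<and> n < 614889782588491410 \<and>
            real (sigma n) / real n >
            real (sigma 224403121196654400) / real 224403121196654400}
         = {497325836165558400, 521585633051683200}"
proof (rule set_eqI, rule iffI)
  fix n :: nat
  assume "n \<in> {n::nat. 448806242393308800 < n \<and> n < 614889782588491410 \<and>
            real (sigma n) / real n >
            real (sigma 224403121196654400) / real 224403121196654400}"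
  then show "n \<in> {497325836165558400, 521585633051683200}" using forward by auto
next
  fix n :: nat
  assume "n \<in> {497325836165558400, 521585633051683200}"
  then show "n \<in> {n::nat. 448806242393308800 < n \<and> n < 614889782588491410 \<and>
            real (sigma n) / real n >
            real (sigma 224403121196654400) / real 224403121196654400}"
    using sol1 sol2 by auto
qed


end
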